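(* For every hinge-loss parameter $\tau>0$ and every Massart noise parameter $0\le\beta<1$, there exists a distribution $\tilde D_{\tau,\beta}$ over $B_1\times\{-1,1\}$, where $B_1\subseteq\mathbb{R}^2$ is the unit disk, whose marginal on $B_1$ is uniform, whose Bayes optimal classifier is a homogeneous halfspace $h_{\vec w^*}$, and which satisfies $|\Pr(y=1\mid\vec x)-\Pr(y=-1\mid\vec x)|\ge\beta$ for all $\vec x$, such that $\tau$-hinge loss minimization is not consistent on $\tilde D_{\tau,\beta}$ with respect to the class of halfspaces: there exist $\epsilon>0$ and a sample size $m(\epsilon)$ such that, with high probability over samples of size at least $m(\epsilon)$, $\tau$-hinge loss minimization outputs a classifier whose excess error $\mathrm{err}_{\tilde D_{\tau,\beta}}(\vec w)-\mathrm{err}_{\tilde D_{\tau,\beta}}(\vec w^* )$ is larger than $\epsilon$.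
   Context: For $\vec w\in\mathbb{R}^2$, $h_{\vec w}(\vec x)=\mathrm{sign}(\vec w\cdot\vec x)$. The $\tau$-hinge loss is $\ell_\tau(\vec w,\vec x,y)=\max\{0,1-\frac{y(\vec w\cdot\vec x)}{\tau}\}$. $\tau$-hinge loss minimization is the algorithm that, on a sample $W$, outputs some $\mathcal{A}_\tau(W)\in\mathrm{argmin}_{\vec w\in B_1}\frac1{|W|}\sum_{(\vec x,y)\in W}\ell_\tau(\vec w,\vec x,y)$. $\mathrm{err}_{\tilde D}(\vec w)=\Pr_{(\vec x,y)\sim\tilde D}[h_{\vec w}(\vec x)\ne y]$. *)

theory Defs
  imports "HOL-Probability.Probability"
begin

type_synonym point = "real ^ 2"

abbreviation B1 :: "point set" where "B1 \<equiv> cball 0 1"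

text \<open>Homogeneous halfspace classifier h_w(x) = sign(w . x) (sgn 0 = 0).\<close>
definition h :: "point \<Rightarrow> point \<Rightarrow> real" where
  "h w x = sgn (w \<bullet> x)"

definition hinge :: "real \<Rightarrow> point \<Rightarrow> point \<Rightarrow> real \<Rightarrow> real" where
  "hinge \<tau> w x y = max 0 (1 - y * (w \<bullet> x) / \<tau>)"

definition emp_hinge :: "real \<Rightarrow> nat \<Rightarrow> (nat \<Rightarrow> point \<times> real) \<Rightarrow> point \<Rightarrow> real" where
  "emp_hinge \<tau> n S w = (\<Sum>i<n. hinge \<tau> w (fst (S i)) (snd (S i))) / real n"

definition hinge_minimizer :: "real \<Rightarrow> nat \<Rightarrow> (nat \<Rightarrow> point \<times> real) \<Rightarrow> point \<Rightarrow> bool" where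
  "hinge_minimizer \<tau> n S w \<longleftrightarrow> w \<in> B1 \<and> (\<forall>v\<in>B1. emp_hinge \<tau> n S w \<le> emp_hinge \<tau> n S v)"

definition err :: "(point \<times> real) measure \<Rightarrow> point \<Rightarrow> real" where
  "err D w = measure D {p. h w (fst p) \<noteq> snd p}"

definition unifB1 :: "point measure" where
  "unifB1 = uniform_measure lborel B1"

end

theory Submission
  imports Defs
begin

lemma B1_borel[measurable]: "B1 \<in> sets borel" by simp

lemma B1_fin: "emeasure lborel B1 < \<infinity>" by (rule emeasure_lborel_cball_finite)

lemma box_sub_ball:
  fixes p :: point
  assumes "r > 0"
  shows "box (p - (r/2) *\<^sub>R One) (p + (r/2) *\<^sub>R One) \<subseteq> ball p r"
proof
  fix x assume x: "x \<in> box (p - (r/2) *\<^sub>R One) (p + (r/2) *\<^sub>R One)"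
  have "norm (x - p) \<le> (\<Sum>b\<in>Basis. \<bar>(x - p) \<bullet> b\<bar>)" by (rule norm_le_l1)
  also have "\<dots> < (\<Sum>b\<in>(Basis::point set). r/2)"
  proof (rule sum_strict_mono)
    fix b :: point assume b: "b \<in> Basis"
    have "p \<bullet> b - r/2 < x \<bullet> b \<and> x \<bullet> b < p \<bullet> b + r/2"
      using x b by (auto simp: mem_box inner_diff_left inner_add_left inner_sum_Basis)
    then show "\<bar>(x - p) \<bullet> b\<bar> < r/2" by (auto simp: inner_diff_left split: abs_split)
  qed auto
  also have "\<dots> = r" by (simp add: DIM_cart)
  finally show "x \<in> ball p r" by (simp add: dist_norm norm_minus_commute)
qed

lemma lborel_ball_pos:
  fixes p :: point
  assumes "r > 0"
  shows "emeasure lborel (ball p r) > 0"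
proof -
  have "emeasure lborel (box (p - (r/2) *\<^sub>R One) (p + (r/2) *\<^sub>R One)) \<le> emeasure lborel (ball p r)"
    by (intro emeasure_mono box_sub_ball assms) simp
  moreover have "emeasure lborel (box (p - (r/2) *\<^sub>R One) (p + (r/2) *\<^sub>R One)) > 0"
  proof -
    have e1: "b \<in> Basis \<Longrightarrow> (p + c *\<^sub>R One) \<bullet> b = p \<bullet> b + c" for b c
      by (simp add: inner_add_left inner_sum_Basis)
    have e2: "b \<in> Basis \<Longrightarrow> (p - c *\<^sub>R One) \<bullet> b = p \<bullet> b - c" for b c
      by (simp add: inner_diff_left inner_sum_Basis)
    have e3: "(2 * One :: point) \<bullet> b = 2" if "b \<in> Basis" for b
      by (simp only: mult_2 inner_add_left inner_sum_Basis[OF that])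
    show ?thesis
      using assms by (subst emeasure_lborel_box_eq)
        (auto simp: inner_diff_left e1 e2 e3 simp del: inner_add_left inner_diff_left intro!: prod_pos)
  qed
  ultimately show ?thesis by order
qed

lemma B1_pos: "emeasure lborel B1 \<noteq> 0"
proof -
  have "emeasure lborel (ball (0::point) 1) \<le> emeasure lborel B1"
    by (intro emeasure_mono) auto
  with lborel_ball_pos[of 1 0] show ?thesis by auto
qed

lemma prob_unif: "prob_space unifB1"
  unfolding unifB1_def using B1_pos B1_fin by (intro prob_space_uniform_measure) auto

lemma sets_unif[simp, measurable_cong]: "sets unifB1 = sets borel"
  by (simp add: unifB1_def)

lemma space_unif[simp]: "space unifB1 = UNIV"
  by (simp add: unifB1_def)

lemma AE_unif_B1: "AE x in unifB1. x \<in> B1"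
  unfolding unifB1_def by (rule AE_uniform_measureI) auto

lemma integrable_unif:
  fixes f :: "point \<Rightarrow> real"
  assumes [measurable]: "f \<in> borel_measurable borel" and "\<And>x. x \<in> B1 \<Longrightarrow> \<bar>f x\<bar> \<le> C"
  shows "integrable unifB1 f"
proof -
  interpret prob_space unifB1 by (rule prob_unif)
  show ?thesis
    apply (rule integrable_const_bound[where B=C])
    using AE_unif_B1 assms(2) by (auto elim!: eventually_mono)
qed

definition lab :: "point \<Rightarrow> bool \<Rightarrow> real" where
  "lab x b = (if x$1 > 0 then (if x$2 > 0 \<and> b then -1 else 1) else -1)"

definition eta :: "real \<Rightarrow> point \<Rightarrow> real" where
  "eta \<nu> x = (if x$1 > 0 then (if x$2 > 0 then 1 - \<nu> else 1) else 0)"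

definition PP :: "real \<Rightarrow> (point \<times> bool) measure" where
  "PP \<nu> = unifB1 \<Otimes>\<^sub>M measure_pmf (bernoulli_pmf \<nu>)"

definition lab2 :: "point \<times> bool \<Rightarrow> point \<times> real" where
  "lab2 = (\<lambda>(x,b). (x, lab x b))"

definition DD :: "real \<Rightarrow> (point \<times> real) measure" where
  "DD \<nu> = distr (PP \<nu>) (borel \<Otimes>\<^sub>M borel) lab2"

definition avg :: "real \<Rightarrow> (point \<Rightarrow> real \<Rightarrow> real) \<Rightarrow> point \<Rightarrow> real" where
  "avg \<nu> g x = \<nu> * g x (lab x True) + (1 - \<nu>) * g x (lab x False)"

lemma lab_pm: "lab x b \<in> {-1, 1}" by (auto simp: lab_def)
lemma lab_cases: "lab x b = -1 \<or> lab x b = 1" by (auto simp: lab_def)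

lemma lab_meas[measurable]: "(\<lambda>x. lab x b) \<in> borel_measurable borel"
  unfolding lab_def by measurable

lemma eta_meas[measurable]: "eta \<nu> \<in> borel_measurable borel"
  unfolding eta_def by measurable

lemma sets_PP[measurable_cong]: "sets (PP \<nu>) = sets (borel \<Otimes>\<^sub>M count_space UNIV)"
  unfolding PP_def by (intro sets_pair_measure_cong) auto

lemma lab2_meas[measurable]: "lab2 \<in> PP \<nu> \<rightarrow>\<^sub>M borel \<Otimes>\<^sub>M borel"
proof -
  have "lab2 = (\<lambda>p. (fst p, if snd p then lab (fst p) True else lab (fst p) False))"
    by (auto simp: lab2_def fun_eq_iff)
  also have "\<dots> \<in> PP \<nu> \<rightarrow>\<^sub>M borel \<Otimes>\<^sub>M borel"
    by measurable
  finally show ?thesis .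
qed

lemma prob_PP: "prob_space (PP \<nu>)"
  unfolding PP_def by (intro prob_space_pair prob_unif prob_space_measure_pmf)

lemma prob_DD: "prob_space (DD \<nu>)"
  unfolding DD_def by (intro prob_space.prob_space_distr prob_PP) simp

lemma sets_DD[simp, measurable_cong]: "sets (DD \<nu>) = sets (borel \<Otimes>\<^sub>M borel)"
  by (simp add: DD_def)

lemma space_DD[simp]: "space (DD \<nu>) = UNIV"
  by (simp add: DD_def space_pair_measure)

lemma AE_PP: "AE p in PP \<nu>. fst p \<in> B1"
proof -
  interpret pair_prob_space unifB1 "measure_pmf (bernoulli_pmf \<nu>)"
    by (intro pair_prob_space.intro pair_sigma_finite.intro prob_space_imp_sigma_finite prob_unif prob_space_measure_pmf)
  show ?thesis
    unfolding PP_def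
    by (rule AE_pair_measure) (auto intro: AE_unif_B1[THEN eventually_mono])
qed

lemma AE_DD: "AE p in DD \<nu>. fst p \<in> B1 \<and> snd p \<in> {-1, 1}"
  unfolding DD_def
  apply (subst AE_distr_iff)
    apply measurable
  using AE_PP[of \<nu>] by eventually_elim (auto simp: lab2_def lab_cases split: prod.splits)

lemma ED:
  assumes nu: "0 \<le> \<nu>" "\<nu> \<le> 1"
  assumes [measurable]: "g \<in> borel_measurable (borel \<Otimes>\<^sub>M borel)"
  assumes bnd: "\<And>x y. x \<in> B1 \<Longrightarrow> y \<in> {-1,1} \<Longrightarrow> \<bar>g (x, y)\<bar> \<le> C"
  shows "integral\<^sup>L (DD \<nu>) g = (\<integral>x. avg \<nu> (\<lambda>x y. g (x, y)) x \<partial>unifB1)"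
proof -
  interpret pair_prob_space unifB1 "measure_pmf (bernoulli_pmf \<nu>)"
    by (intro pair_prob_space.intro pair_sigma_finite.intro prob_space_imp_sigma_finite prob_unif prob_space_measure_pmf)
  have "integral\<^sup>L (DD \<nu>) g = integral\<^sup>L (PP \<nu>) (\<lambda>p. g (lab2 p))"
    unfolding DD_def by (rule integral_distr) measurable
  also have "\<dots> = (\<integral>x. \<integral>b. g (lab2 (x, b)) \<partial>bernoulli_pmf \<nu> \<partial>unifB1)"
  proof (rule integral_fst'[symmetric, unfolded PP_def[symmetric]])
    show "integrable (PP \<nu>) (\<lambda>p. g (lab2 p))"
    proof (rule finite_measure.integrable_const_bound[where B=C])
      show "finite_measure (PP \<nu>)" using prob_PP prob_space_def by blast
      show "AE p in PP \<nu>. norm (g (lab2 p)) \<le> C"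
        using AE_PP by eventually_elim (auto simp: lab2_def intro!: bnd lab_pm split: prod.splits)
    qed measurable
  qed
  also have "\<dots> = (\<integral>x. avg \<nu> (\<lambda>x y. g (x, y)) x \<partial>unifB1)"
    using nu by (intro Bochner_Integration.integral_cong refl) (auto simp: avg_def lab2_def)
  finally show ?thesis .
qed

definition refl2 :: "point \<Rightarrow> point" where
  "refl2 x = (\<chi> i. if i = 2 then - (x$i) else x$i)"

lemma refl2_1[simp]: "refl2 x $ 1 = x $ 1" by (simp add: refl2_def)
lemma refl2_2[simp]: "refl2 x $ 2 = - (x $ 2)" by (simp add: refl2_def)
lemma refl2_refl2[simp]: "refl2 (refl2 x) = x"
  by (simp add: refl2_def vec_eq_iff)

lemma norm_refl2[simp]: "norm (refl2 x) = norm x"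
  unfolding norm_vec_def by (intro L2_set_cong) (auto simp: refl2_def)

lemma refl2_meas[measurable]: "refl2 \<in> borel_measurable borel"
proof -
  have "linear refl2"
    by (rule linearI) (auto simp: refl2_def vec_eq_iff)
  then have "bounded_linear refl2" using linear_conv_bounded_linear by blast
  then show ?thesis by (intro borel_measurable_continuous_onI linear_continuous_on)
qed

lemma lborel_refl2: "distr lborel borel refl2 = (lborel :: point measure)"
proof -
  define c :: "point \<Rightarrow> real" where "c j = (if j = axis 2 1 then -1 else 1)" for j
  define T where "T x = (0::point) + (\<Sum>j\<in>Basis. (c j * (x \<bullet> j)) *\<^sub>R j)" for x
  have cnz: "\<And>j. j \<in> Basis \<Longrightarrow> c j \<noteq> 0" by (simp add: c_def)
  have T: "T = refl2"
  proof
    fix x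
    have "(\<Sum>j\<in>Basis. (c j * (x \<bullet> j)) *\<^sub>R j) = refl2 x"
      unfolding euclidean_representation_sum
      by (auto simp: Basis_vec_def inner_axis c_def refl2_def axis_eq_axis)
    then show "T x = refl2 x" by (simp add: T_def)
  qed
  have p1: "(\<Prod>j\<in>(Basis::point set). \<bar>c j\<bar>) = 1"
    by (intro prod.neutral) (auto simp: c_def)
  have "lborel = density (distr lborel borel T) (\<lambda>_. (\<Prod>j\<in>Basis. \<bar>c j\<bar>))"
    unfolding T_def by (rule lborel_affine_euclidean) (rule cnz)
  then show ?thesis by (simp add: p1 T density_1)
qed

lemma unif_refl2: "distr unifB1 borel refl2 = unifB1"
proof (rule measure_eqI)
  show "sets (distr unifB1 borel refl2) = sets unifB1" by simp
  fix A assume A: "A \<in> sets (distr unifB1 borel refl2)"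
  then have [measurable]: "A \<in> sets borel" by simp
  have [measurable]: "refl2 -` A \<in> sets borel" using measurable_sets[OF refl2_meas, of A] by simp
  have pre: "refl2 -` A \<inter> space unifB1 = refl2 -` A" by simp
  have eq: "B1 \<inter> refl2 -` A = refl2 -` (B1 \<inter> A) \<inter> space lborel"
    by auto
  have "emeasure (distr unifB1 borel refl2) A = emeasure unifB1 (refl2 -` A)"
    by (subst emeasure_distr) (auto simp: pre)
  also have "\<dots> = emeasure lborel (B1 \<inter> refl2 -` A) / emeasure lborel B1"
    unfolding unifB1_def by (subst emeasure_uniform_measure) auto
  also have "emeasure lborel (B1 \<inter> refl2 -` A) = emeasure (distr lborel borel refl2) (B1 \<inter> A)"
    unfolding eq by (subst emeasure_distr) auto
  also have "\<dots> = emeasure lborel (B1 \<inter> A)" by (simp add: lborel_refl2)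
  also have "emeasure lborel (B1 \<inter> A) / emeasure lborel B1 = emeasure unifB1 A"
    unfolding unifB1_def by (subst emeasure_uniform_measure) auto
  finally show "emeasure (distr unifB1 borel refl2) A = emeasure unifB1 A" .
qed

lemma integral_refl2:
  fixes f :: "point \<Rightarrow> real"
  assumes [measurable]: "f \<in> borel_measurable borel"
  shows "(\<integral>x. f (refl2 x) \<partial>unifB1) = (\<integral>x. f x \<partial>unifB1)"
proof -
  have "(\<integral>x. f (refl2 x) \<partial>unifB1) = integral\<^sup>L (distr unifB1 borel refl2) f"
    by (rule integral_distr[symmetric]) auto
  then show ?thesis by (simp add: unif_refl2)
qed

lemma inner2: "(w::point) \<bullet> x = w$1 * x$1 + w$2 * x$2"
  by (simp add: inner_vec_def sum_2)

lemma norm2_sq: "norm (x::point) ^ 2 = (x$1)^2 + (x$2)^2"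
  unfolding power2_norm_eq_inner by (simp add: inner2 power2_eq_square)

lemma B1_comp: "x \<in> B1 \<Longrightarrow> \<bar>x $ i\<bar> \<le> 1"
  using component_le_norm_cart[of x i] by auto

lemma B1_inner: "x \<in> B1 \<Longrightarrow> \<bar>w \<bullet> x\<bar> \<le> norm w"
proof -
  assume "x \<in> B1"
  then have "norm x \<le> 1" by auto
  moreover have "\<bar>w \<bullet> x\<bar> \<le> norm w * norm x" by (rule Cauchy_Schwarz_ineq2)
  ultimately show ?thesis by (smt (verit) mult_left_le norm_ge_zero)
qed

lemma lam_pos: "measure lborel B1 > 0"
  using B1_pos B1_fin by (simp add: measure_def enn2real_positive_iff less_top[symmetric] zero_less_iff_neq_zero)

lemma measure_unif: "S \<in> sets borel \<Longrightarrow> measure unifB1 S = measure lborel (B1 \<inter> S) / measure lborel B1"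
  unfolding unifB1_def using B1_pos B1_fin by (intro measure_uniform_measure) auto

lemma measure_unif_ball_pos:
  assumes "ball p r \<subseteq> B1" "r > 0"
  shows "measure unifB1 (ball p r) > 0"
proof -
  have "measure lborel (ball p r) > 0"
    using lborel_ball_pos[OF assms(2), of p] emeasure_lborel_ball_finite[of p r]
    by (simp add: measure_def enn2real_positive_iff less_top[symmetric] zero_less_iff_neq_zero)
  moreover have "B1 \<inter> ball p r = ball p r" using assms by auto
  ultimately show ?thesis using lam_pos by (simp add: measure_unif)
qed

lemma integral_pos:
  fixes f g :: "point \<Rightarrow> real"
  assumes [measurable]: "f \<in> borel_measurable borel"
  assumes bnd: "\<And>x. x \<in> B1 \<Longrightarrow> \<bar>f x\<bar> \<le> C"
  assumes le: "\<And>x. x \<in> B1 \<Longrightarrow> g x \<le> f x"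
  assumes nn: "\<And>x. x \<in> B1 \<Longrightarrow> 0 \<le> g x"
  assumes cont: "continuous_on UNIV g"
  assumes p: "norm p < 1" "g p > 0"
  shows "(\<integral>x. f x \<partial>unifB1) > 0"
proof -
  interpret prob_space unifB1 by (rule prob_unif)
  have "isCont g p" using cont by (simp add: continuous_on_eq_continuous_at)
  then obtain d where d: "d > 0" "\<And>x'. dist x' p < d \<Longrightarrow> dist (g x') (g p) < g p / 2"
    unfolding continuous_at_eps_delta using p(2) by (metis half_gt_zero)
  define r where "r = min d (1 - norm p)"
  have r: "r > 0" using d p by (simp add: r_def)
  have sub: "ball p r \<subseteq> B1"
  proof
    fix x assume "x \<in> ball p r"
    then have "norm (x - p) < 1 - norm p" by (simp add: r_def dist_norm norm_minus_commute)
    then have "norm x < 1" using norm_triangle_ineq[of "x - p" p] by simp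
    then show "x \<in> B1" by simp
  qed
  have gb: "g x > g p / 2" if "x \<in> ball p r" for x
  proof -
    have "dist (g x) (g p) < g p / 2" using d(2)[of x] that by (auto simp: r_def dist_commute)
    then show ?thesis unfolding dist_real_def by arith
  qed
  have "(\<integral>x. (g p / 2) * indicator (ball p r) x \<partial>unifB1) \<le> (\<integral>x. f x \<partial>unifB1)"
  proof (rule integral_mono_AE)
    show "integrable unifB1 (\<lambda>x. (g p / 2) * indicator (ball p r) x)"
      by (intro integrable_mult_right integrable_real_indicator) (auto simp: less_top[symmetric])
    show "integrable unifB1 f" by (rule integrable_unif[OF _ bnd]) auto
    show "AE x in unifB1. g p / 2 * indicator (ball p r) x \<le> f x"
      using AE_unif_B1
    proof eventually_elim
      case (elim x)
      show ?case
      proof (cases "x \<in> ball p r")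
        case True then show ?thesis using gb[OF True] le[OF elim] by simp
      next
        case False then show ?thesis using nn[OF elim] le[OF elim] by simp
      qed
    qed
  qed
  moreover have "(\<integral>x. (g p / 2) * indicator (ball p r) x \<partial>unifB1) = (g p / 2) * measure unifB1 (ball p r)"
    by simp
  moreover have "(g p / 2) * measure unifB1 (ball p r) > 0"
    using measure_unif_ball_pos[OF sub r] p by simp
  ultimately show ?thesis by linarith
qed

definition Lpop :: "real \<Rightarrow> real \<Rightarrow> point \<Rightarrow> real" where
  "Lpop \<nu> \<tau> w = (\<integral>x. avg \<nu> (\<lambda>x y. hinge \<tau> w x y) x \<partial>unifB1)"

lemma avg_meas[measurable]:
  assumes [measurable]: "(\<lambda>x. g x (lab x True)) \<in> borel_measurable borel"
     "(\<lambda>x. g x (lab x False)) \<in> borel_measurable borel"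
  shows "avg \<nu> g \<in> borel_measurable borel"
  unfolding avg_def by measurable

lemma avg_bnd:
  assumes "0 \<le> \<nu>" "\<nu> \<le> 1" "\<And>y. y \<in> {-1,1} \<Longrightarrow> \<bar>g x y\<bar> \<le> C"
  shows "\<bar>avg \<nu> g x\<bar> \<le> C"
proof -
  have a: "\<bar>g x (lab x True)\<bar> \<le> C" "\<bar>g x (lab x False)\<bar> \<le> C" using assms(3) lab_pm by auto
  have "\<bar>avg \<nu> g x\<bar> \<le> \<nu> * \<bar>g x (lab x True)\<bar> + (1 - \<nu>) * \<bar>g x (lab x False)\<bar>"
    unfolding avg_def using assms(1,2) by (intro order_trans[OF abs_triangle_ineq]) (simp add: abs_mult)
  also have "\<dots> \<le> \<nu> * C + (1 - \<nu>) * C"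
    using assms(1,2) a by (intro add_mono mult_left_mono) auto
  finally show ?thesis by (simp add: algebra_simps)
qed

lemma avg_int:
  assumes [measurable]: "(\<lambda>x. g x (lab x True)) \<in> borel_measurable borel"
     "(\<lambda>x. g x (lab x False)) \<in> borel_measurable borel"
  assumes "0 \<le> \<nu>" "\<nu> \<le> 1" "\<And>x y. x \<in> B1 \<Longrightarrow> y \<in> {-1,1} \<Longrightarrow> \<bar>g x y\<bar> \<le> C"
  shows "integrable unifB1 (avg \<nu> g)"
  by (rule integrable_unif[where C=C]) (use assms avg_bnd in auto)

lemma int_mono_B1:
  fixes f g :: "point \<Rightarrow> real"
  assumes "integrable unifB1 f" "integrable unifB1 g" "\<And>x. x \<in> B1 \<Longrightarrow> f x \<le> g x"
  shows "(\<integral>x. f x \<partial>unifB1) \<le> (\<integral>x. g x \<partial>unifB1)"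
  by (rule integral_mono_AE) (use assms AE_unif_B1 in \<open>auto elim: eventually_mono\<close>)

lemma int_abs_le:
  fixes f :: "point \<Rightarrow> real"
  assumes "integrable unifB1 f" "\<And>x. x \<in> B1 \<Longrightarrow> \<bar>f x\<bar> \<le> K"
  shows "\<bar>\<integral>x. f x \<partial>unifB1\<bar> \<le> K"
proof -
  interpret prob_space unifB1 by (rule prob_unif)
  have "\<bar>\<integral>x. f x \<partial>unifB1\<bar> \<le> (\<integral>x. \<bar>f x\<bar> \<partial>unifB1)" using integral_norm_bound[of unifB1 f] by simp
  also have "\<dots> \<le> (\<integral>x. K \<partial>unifB1)"
    using assms by (intro int_mono_B1) auto
  also have "\<dots> = K" using prob_space by simp
  finally show ?thesis .
qed

lemma max0_lip: "\<bar>max 0 a - max 0 b\<bar> \<le> \<bar>a - b\<bar>" for a b :: real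
  unfolding max_def by auto

lemma max0_bnd: "\<bar>max 0 (1 - z)\<bar> \<le> 1 + \<bar>z\<bar>" for z :: real
  unfolding max_def by auto

lemma hinge_meas[measurable]: "(\<lambda>x. hinge \<tau> w x (lab x b)) \<in> borel_measurable borel"
  unfolding hinge_def by measurable

lemma hinge_lip:
  assumes "\<tau> > 0" "x \<in> B1" "y \<in> {-1,1}"
  shows "\<bar>hinge \<tau> w x y - hinge \<tau> v x y\<bar> \<le> norm (w - v) / \<tau>"
proof -
  have "\<bar>(w - v) \<bullet> x\<bar> \<le> norm (w - v)" using B1_inner[OF assms(2)] by blast
  then have "\<bar>y * (w \<bullet> x) - y * (v \<bullet> x)\<bar> \<le> norm (w - v)"
    using assms(3) by (auto simp: inner_diff_left abs_minus_commute)
  then have "\<bar>(1 - y * (w \<bullet> x) / \<tau>) - (1 - y * (v \<bullet> x) / \<tau>)\<bar> \<le> norm (w - v) / \<tau>"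
    using assms(1) by (simp add: diff_divide_distrib[symmetric] abs_minus_commute divide_right_mono)
  then show ?thesis unfolding hinge_def using max0_lip by (meson order_trans)
qed

lemma hinge_bnd:
  assumes "\<tau> > 0" "x \<in> B1" "y \<in> {-1,1}" "norm w \<le> 1"
  shows "\<bar>hinge \<tau> w x y\<bar> \<le> 1 + 1 / \<tau>"
proof -
  have "\<bar>w \<bullet> x\<bar> \<le> 1" using B1_inner[OF assms(2), of w] assms(4) by simp
  then have "\<bar>y * (w \<bullet> x)\<bar> \<le> 1" using assms(3) by auto
  then have "\<bar>y * (w \<bullet> x) / \<tau>\<bar> \<le> 1 / \<tau>" using assms(1) by (simp add: divide_right_mono)
  then show ?thesis unfolding hinge_def using max0_bnd[of "y * (w \<bullet> x) / \<tau>"] by linarith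
qed

lemma hinge_bnd':
  assumes "\<tau> > 0" "x \<in> B1" "y \<in> {-1,1}"
  shows "\<bar>hinge \<tau> w x y\<bar> \<le> 1 + norm w / \<tau>"
proof -
  have "\<bar>w \<bullet> x\<bar> \<le> norm w" using B1_inner[OF assms(2), of w] by simp
  then have "\<bar>y * (w \<bullet> x)\<bar> \<le> norm w" using assms(3) by auto
  then have "\<bar>y * (w \<bullet> x) / \<tau>\<bar> \<le> norm w / \<tau>" using assms(1) by (simp add: divide_right_mono)
  then show ?thesis unfolding hinge_def using max0_bnd[of "y * (w \<bullet> x) / \<tau>"] by linarith
qed

lemma hinge_avg_int:
  assumes "\<tau> > 0" "0 \<le> \<nu>" "\<nu> \<le> 1"
  shows "integrable unifB1 (avg \<nu> (\<lambda>x y. hinge \<tau> w x y))"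
  by (rule avg_int[where C="1 + norm w / \<tau>"]) (use assms hinge_bnd' in auto)

lemma Lpop_lip:
  assumes "\<tau> > 0" "0 \<le> \<nu>" "\<nu> \<le> 1"
  shows "\<bar>Lpop \<nu> \<tau> w - Lpop \<nu> \<tau> v\<bar> \<le> norm (w - v) / \<tau>"
proof -
  have "Lpop \<nu> \<tau> w - Lpop \<nu> \<tau> v = (\<integral>x. avg \<nu> (\<lambda>x y. hinge \<tau> w x y) x - avg \<nu> (\<lambda>x y. hinge \<tau> v x y) x \<partial>unifB1)"
    unfolding Lpop_def using hinge_avg_int[OF assms, of w] hinge_avg_int[OF assms, of v] by (simp add: integral_diff)
  also have "\<bar>\<dots>\<bar> \<le> norm (w - v) / \<tau>"
  proof (rule int_abs_le)
    show "integrable unifB1 (\<lambda>x. avg \<nu> (\<lambda>x y. hinge \<tau> w x y) x - avg \<nu> (\<lambda>x y. hinge \<tau> v x y) x)"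
      using hinge_avg_int[OF assms] by auto
    fix x assume x: "x \<in> B1"
    have "avg \<nu> (\<lambda>x y. hinge \<tau> w x y) x - avg \<nu> (\<lambda>x y. hinge \<tau> v x y) x
        = avg \<nu> (\<lambda>x y. hinge \<tau> w x y - hinge \<tau> v x y) x"
      by (simp add: avg_def algebra_simps)
    also have "\<bar>\<dots>\<bar> \<le> norm (w - v) / \<tau>"
      using assms x hinge_lip by (intro avg_bnd) auto
    finally show "\<bar>avg \<nu> (\<lambda>x y. hinge \<tau> w x y) x - avg \<nu> (\<lambda>x y. hinge \<tau> v x y) x\<bar> \<le> norm (w - v) / \<tau>" .
  qed
  finally show ?thesis .
qed

lemma Lpop_cont:
  assumes "\<tau> > 0" "0 \<le> \<nu>" "\<nu> \<le> 1"
  shows "continuous_on UNIV (Lpop \<nu> \<tau>)"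
proof (rule continuous_on_iff[THEN iffD2], intro ballI allI impI)
  fix w :: point and e :: real assume e: "e > 0"
  show "\<exists>d>0. \<forall>v\<in>UNIV. dist v w < d \<longrightarrow> dist (Lpop \<nu> \<tau> v) (Lpop \<nu> \<tau> w) < e"
  proof (intro exI[of _ "e * \<tau>"] conjI ballI impI)
    show "e * \<tau> > 0" using e assms by simp
    fix v :: point assume "dist v w < e * \<tau>"
    then have "norm (v - w) / \<tau> < e" using assms by (simp add: dist_norm pos_divide_less_eq)
    then show "dist (Lpop \<nu> \<tau> v) (Lpop \<nu> \<tau> w) < e"
      using Lpop_lip[OF assms, of v w] by (simp add: dist_real_def)
  qed
qed

lemma UNIV2: "(UNIV::2 set) = {1,2}" using exhaust_2 by auto

lemma prod_UNIV2: "(\<Prod>i\<in>(UNIV::2 set). f i) = f 1 * f 2"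
  by (simp add: UNIV2)

lemma vec2_inner: "vector [a, b] \<bullet> (x::point) = a * x$1 + b * x$2"
  by (simp add: inner2 vector_2)

lemma lam_def': "measure unifB1 S = measure lborel (B1 \<inter> S) / measure lborel B1" if "S \<in> sets borel"
  using measure_unif[OF that] .

lemma strip_bound:
  assumes "\<delta> \<ge> 0"
  shows "measure unifB1 {x::point. \<bar>x$1 - c\<bar> \<le> \<delta>} \<le> 4 * \<delta> / measure lborel B1"
proof -
  let ?S = "{x::point. \<bar>x$1 - c\<bar> \<le> \<delta>}"
  let ?C = "cbox (vector [c - \<delta>, -1]) (vector [c + \<delta>, 1]) :: point set"
  have [measurable]: "?S \<in> sets borel" by measurable
  have sub: "B1 \<inter> ?S \<subseteq> ?C"
  proof
    fix x assume x: "x \<in> B1 \<inter> ?S"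
    then have "\<bar>x$2\<bar> \<le> 1" using B1_comp by blast
    then show "x \<in> ?C" using x by (auto simp: mem_box_cart forall_2 vector_2 abs_le_iff)
  qed
  have "vector [c, 0] \<in> ?C" using assms by (auto simp: mem_box_cart forall_2 vector_2)
  then have ne: "?C \<noteq> {}" by blast
  have "measure lborel (B1 \<inter> ?S) \<le> measure lborel ?C"
    by (rule measure_mono_fmeasurable[OF sub]) auto
  also have "\<dots> = 4 * \<delta>"
    using ne by (simp add: content_cbox_cart prod_UNIV2 vector_2)
  finally show ?thesis using lam_pos by (simp add: measure_unif divide_right_mono)
qed

lemma vec_B1: "norm (vector [a, b] :: point) \<le> 1 \<longleftrightarrow> a^2 + b^2 \<le> 1"
proof -
  have "norm (vector [a, b] :: point) \<le> 1 \<longleftrightarrow> norm (vector [a, b] :: point) ^ 2 \<le> 1"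
    by (simp add: power_le_one_iff)
  then show ?thesis by (simp only: norm2_sq vector_2)
qed

lemma Lpop_0:
  assumes "\<tau> > 0" 
  shows "Lpop \<nu> \<tau> 0 = 1"
proof -
  interpret prob_space unifB1 by (rule prob_unif)
  show ?thesis unfolding Lpop_def avg_def hinge_def using prob_space by (simp add: algebra_simps)
qed

lemma avg_x1_pos:
  assumes "0 \<le> \<nu>" "\<nu> < 1/2"
  shows "(\<integral>x. avg \<nu> (\<lambda>x y. y * x$1) x \<partial>unifB1) > 0"
proof (rule integral_pos[where C=1 and g="\<lambda>x. (1 - 2*\<nu>) * max 0 (x$1)" and p="vector [1/2, 0]"])
  show "avg \<nu> (\<lambda>x y. y * x $ 1) \<in> borel_measurable borel" by measurable
  fix x :: point assume x: "x \<in> B1"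
  have c: "\<bar>x$1\<bar> \<le> 1" using B1_comp[OF x] .
  show "\<bar>avg \<nu> (\<lambda>x y. y * x $ 1) x\<bar> \<le> 1"
    using assms c lab_cases by (intro avg_bnd) (auto simp: abs_mult)
  show "(1 - 2 * \<nu>) * max 0 (x $ 1) \<le> avg \<nu> (\<lambda>x y. y * x $ 1) x"
    using assms by (auto simp: avg_def lab_def algebra_simps max_def)
  show "0 \<le> (1 - 2 * \<nu>) * max 0 (x $ 1)" using assms by auto
next
  show "continuous_on UNIV (\<lambda>x::point. (1 - 2 * \<nu>) * max 0 (x $ 1))"
    by (intro continuous_intros)
  show "norm (vector [1 / 2, 0] :: point) < 1"
  proof -
    have "norm (vector [1 / 2, 0] :: point) ^ 2 < 1" by (simp only: norm2_sq vector_2) (simp add: power2_eq_square)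
    then show ?thesis using abs_square_less_1[of "norm (vector [1 / 2, 0] :: point)"] by simp
  qed
  show "0 < (1 - 2 * \<nu>) * max 0 (vector [1 / 2, 0::real] $ 1)"
    using assms by (simp add: vector_2)
qed

lemma descent_0:
  assumes "\<tau> > 0" "0 \<le> \<nu>" "\<nu> < 1/2"
  shows "\<exists>v\<in>B1. Lpop \<nu> \<tau> v < Lpop \<nu> \<tau> 0"
proof -
  define t where "t = min 1 \<tau>"
  have t: "0 < t" "t \<le> 1" "t \<le> \<tau>" using assms by (auto simp: t_def)
  define v :: point where "v = vector [t, 0]"
  have vB: "v \<in> B1" using t unfolding mem_cball_0 v_def vec_B1 by (simp add: power_le_one)
  let ?A = "avg \<nu> (\<lambda>x y. y * x$1)"
  have intA: "integrable unifB1 ?A"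
    by (rule avg_int[where C=1]) (use assms B1_comp in \<open>auto simp: abs_mult\<close>)
  have eq: "avg \<nu> (\<lambda>x y. hinge \<tau> v x y) x = 1 - (t/\<tau>) * ?A x" if x: "x \<in> B1" for x
  proof -
    have "\<bar>x$1\<bar> \<le> 1" using B1_comp[OF x] .
    then have tt: "t * \<bar>x$1\<bar> \<le> t * 1" using t by (intro mult_left_mono) auto
    have "\<bar>t * x$1\<bar> = t * \<bar>x$1\<bar>" using t by (simp add: abs_mult)
    then have tx: "\<bar>t * x$1\<bar> \<le> \<tau>" using tt t by linarith
    have h: "hinge \<tau> v x y = 1 - (t/\<tau>) * (y * x$1)" if "y = -1 \<or> y = 1" for y
    proof -
      have "\<bar>y * (t * x$1)\<bar> \<le> \<tau>" using that tx by auto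
      then have "y * (t * x$1) / \<tau> \<le> 1" using assms(1) by (simp add: abs_le_iff)
      moreover have "v \<bullet> x = t * x$1" by (simp add: v_def vec2_inner)
      ultimately show ?thesis unfolding hinge_def by (simp add: max_def)
    qed
    show ?thesis
      by (simp only: avg_def h[OF lab_cases[of x True]] h[OF lab_cases[of x False]]) (use assms(1) in \<open>simp add: field_simps\<close>)
  qed
  have "Lpop \<nu> \<tau> v = (\<integral>x. 1 - (t/\<tau>) * ?A x \<partial>unifB1)"
    unfolding Lpop_def
    by (rule integral_cong_AE) (use AE_unif_B1 eq in \<open>auto elim: eventually_mono\<close>)
  also have "\<dots> = 1 - (t/\<tau>) * (\<integral>x. ?A x \<partial>unifB1)"
  proof -
    interpret prob_space unifB1 by (rule prob_unif)
    show ?thesis using intA prob_space by (simp add: integral_diff)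
  qed
  also have "\<dots> < 1" using avg_x1_pos[OF assms(2,3)] t assms(1) by simp
  finally show ?thesis using vB Lpop_0[OF assms(1)] by auto
qed

lemma hinge_step:
  fixes a b t Dm \<tau> :: real
  assumes "\<tau> > 0" "t > 0" "\<bar>b\<bar> \<le> Dm"
  shows "max 0 (1 - (a + t*b)/\<tau>) - max 0 (1 - a/\<tau>)
     \<le> -(t/\<tau>) * b * (if a < \<tau> then 1 else 0) + (2*t*Dm/\<tau>) * (if \<bar>a - \<tau>\<bar> \<le> t*Dm then 1 else 0)"
proof -
  have e: "\<bar>t*b\<bar> \<le> t*Dm" using assms by (simp add: abs_mult mult_left_mono)
  have m1: "max 0 (1 - (a + t*b)/\<tau>) = max 0 (\<tau> - a - t*b) / \<tau>"
    using assms(1) by (simp add: max_def field_simps)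
  have m2: "max 0 (1 - a/\<tau>) = max 0 (\<tau> - a) / \<tau>"
    using assms(1) by (simp add: max_def field_simps)
  define I1 :: real where "I1 = (if a < \<tau> then 1 else 0)"
  define I2 :: real where "I2 = (if \<bar>a - \<tau>\<bar> \<le> t*Dm then 1 else 0)"
  have r: "-(t/\<tau>) * b * (if a < \<tau> then 1 else 0) + (2*t*Dm/\<tau>) * (if \<bar>a - \<tau>\<bar> \<le> t*Dm then 1 else 0)
     = (-(t*b) * (if a < \<tau> then 1 else 0) + (2*(t*Dm)) * (if \<bar>a - \<tau>\<bar> \<le> t*Dm then 1 else 0)) / \<tau>"
    unfolding I1_def[symmetric] I2_def[symmetric] using assms(1) by (simp add: field_simps)
  have core: "max 0 (\<tau> - a - t*b) - max 0 (\<tau> - a)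
     \<le> -(t*b) * (if a < \<tau> then 1 else 0) + (2*(t*Dm)) * (if \<bar>a - \<tau>\<bar> \<le> t*Dm then 1 else 0)"
  proof (cases "\<bar>a - \<tau>\<bar> \<le> t*Dm")
    case True
    have "max 0 (\<tau> - a - t*b) - max 0 (\<tau> - a) \<le> \<bar>t*b\<bar>" using max0_lip[of "\<tau> - a - t*b" "\<tau> - a"] by simp
    moreover have "-(t*b) * (if a < \<tau> then 1 else 0) \<ge> - \<bar>t*b\<bar>" using abs_ge_self[of "t*b"] by auto
    ultimately show ?thesis using True e by simp
  next
    case False
    then consider "a < \<tau> - t*Dm" | "a > \<tau> + t*Dm" by linarith
    then show ?thesis
    proof cases
      case 1
      then have "\<tau> - a - t*b > 0" "\<tau> - a > 0" using e by linarith+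
      then show ?thesis using 1 False by simp
    next
      case 2
      then have "\<tau> - a - t*b \<le> 0" "\<tau> - a \<le> 0" using e by linarith+
      then show ?thesis using 2 False by simp
    qed
  qed
  show ?thesis unfolding m1 m2 r using core assms(1)
    by (simp add: diff_divide_distrib[symmetric] divide_right_mono)
qed

lemma Qneg:
  assumes "\<tau> > 0" "0 < \<nu>" "\<nu> \<le> 1" "r > 0"
  shows "(\<integral>x. avg \<nu> (\<lambda>x y. y * x$2 * (if y * (r * x$1) < \<tau> then 1 else 0)) x \<partial>unifB1) < 0"
proof -
  define f where "f = avg \<nu> (\<lambda>x y. y * x$2 * (if y * (r * x$1) < \<tau> then 1 else 0))"
  have fm[measurable]: "f \<in> borel_measurable borel" unfolding f_def by measurable
  have fb: "\<bar>f x\<bar> \<le> 1" if "x \<in> B1" for x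
    unfolding f_def using assms B1_comp[OF that, of 2] by (intro avg_bnd) (auto simp: abs_mult)
  have fi: "integrable unifB1 f" by (rule integrable_unif[OF fm fb])
  have fRm[measurable]: "(\<lambda>x. f (refl2 x)) \<in> borel_measurable borel" by measurable
  have fRi: "integrable unifB1 (\<lambda>x. f (refl2 x))"
  proof (rule integrable_unif[OF fRm])
    fix x :: point assume "x \<in> B1"
    then have "refl2 x \<in> B1" by simp
    then show "\<bar>f (refl2 x)\<bar> \<le> 1" by (rule fb)
  qed
  have key: "f x + f (refl2 x) \<le> - (\<nu> * \<bar>x$2\<bar> * (if x$1 > 0 then 1 else 0))" for x
  proof -
    define I :: real where "I = (if r * x$1 < \<tau> then 1 else 0)"
    define J :: real where "J = (if - (r * x$1) < \<tau> then 1 else 0)"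
    have I01: "I = 0 \<or> I = 1" by (simp add: I_def)
    show ?thesis
    proof (cases "x$1 > 0")
      case x1: True
      have J1: "J = 1" using x1 assms unfolding J_def by (smt (verit) mult_pos_pos)
      consider "x$2 > 0" | "x$2 < 0" | "x$2 = 0" by linarith
      then show ?thesis
      proof cases
        case 1
        have p: "\<nu> * x$2 > 0" using 1 assms by simp
        have e1: "f x = \<nu> * (- x$2 * J) + (1 - \<nu>) * (x$2 * I)"
          using x1 1 by (simp add: f_def avg_def lab_def I_def J_def)
        have e2: "f (refl2 x) = \<nu> * (- x$2 * I) + (1 - \<nu>) * (- x$2 * I)"
          using x1 1 by (simp add: f_def avg_def lab_def I_def)
        have "f x + f (refl2 x) = -(\<nu> * x$2) - (\<nu> * x$2) * I"
          unfolding e1 e2 J1 by (simp add: algebra_simps)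
        then show ?thesis using I01 p x1 1 by auto
      next
        case 2
        have p: "\<nu> * x$2 < 0" using 2 assms by (simp add: mult_pos_neg)
        have e1: "f x = \<nu> * (x$2 * I) + (1 - \<nu>) * (x$2 * I)"
          using x1 2 by (simp add: f_def avg_def lab_def I_def)
        have e2: "f (refl2 x) = \<nu> * (x$2 * J) + (1 - \<nu>) * (- x$2 * I)"
          using x1 2 by (simp add: f_def avg_def lab_def I_def J_def)
        have "f x + f (refl2 x) = (\<nu> * x$2) + (\<nu> * x$2) * I"
          unfolding e1 e2 J1 by (simp add: algebra_simps)
        then show ?thesis using I01 p x1 2 by auto
      next
        case 3
        then show ?thesis by (simp add: f_def avg_def)
      qed
    next
      case False
      have e1: "f x = \<nu> * (- x$2 * J) + (1 - \<nu>) * (- x$2 * J)"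
        using False by (simp add: f_def avg_def lab_def J_def)
      have e2: "f (refl2 x) = \<nu> * (x$2 * J) + (1 - \<nu>) * (x$2 * J)"
        using False by (simp add: f_def avg_def lab_def J_def)
      show ?thesis unfolding e1 e2 using False by (simp add: algebra_simps)
    qed
  qed
  have pos: "(\<integral>x. -(f x + f (refl2 x)) \<partial>unifB1) > 0"
  proof (rule integral_pos[where C=2 and g="\<lambda>x. \<nu> * \<bar>x$2\<bar> * max 0 (x$1)" and p="vector [1/2, 1/2]"])
    fix x :: point assume x: "x \<in> B1"
    have "refl2 x \<in> B1" using x by simp
    then show "\<bar>-(f x + f (refl2 x))\<bar> \<le> 2" using fb[OF x] fb[of "refl2 x"] by linarith
    have c1: "x$1 \<le> 1" using B1_comp[OF x, of 1] by simp
    have "\<nu> * \<bar>x$2\<bar> * max 0 (x$1) \<le> \<nu> * \<bar>x$2\<bar> * (if x$1 > 0 then 1 else 0)"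
      using c1 assms by (intro mult_left_mono) auto
    then show "\<nu> * \<bar>x$2\<bar> * max 0 (x$1) \<le> -(f x + f (refl2 x))" using key[of x] by linarith
    show "0 \<le> \<nu> * \<bar>x$2\<bar> * max 0 (x$1)" using assms by simp
  next
    show "(\<lambda>x. -(f x + f (refl2 x))) \<in> borel_measurable borel" by measurable
    show "continuous_on UNIV (\<lambda>x::point. \<nu> * \<bar>x$2\<bar> * max 0 (x$1))"
      by (intro continuous_intros)
    have "norm (vector [1 / 2, 1 / 2] :: point) ^ 2 < 1"
      by (simp only: norm2_sq vector_2) (simp add: power2_eq_square)
    then show "norm (vector [1 / 2, 1 / 2] :: point) < 1"
      using abs_square_less_1[of "norm (vector [1 / 2, 1 / 2] :: point)"] by simp
    show "0 < \<nu> * \<bar>(vector [1 / 2, 1 / 2] :: point) $ 2\<bar> * max 0 ((vector [1 / 2, 1 / 2] :: point) $ 1)"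
      using assms by (simp add: vector_2)
  qed
  have "(\<integral>x. -(f x + f (refl2 x)) \<partial>unifB1) = - ((\<integral>x. f x \<partial>unifB1) + (\<integral>x. f (refl2 x) \<partial>unifB1))"
    using fi fRi by simp
  also have "(\<integral>x. f (refl2 x) \<partial>unifB1) = (\<integral>x. f x \<partial>unifB1)" by (rule integral_refl2) simp
  finally show ?thesis using pos unfolding f_def by linarith
qed

lemma descent_r:
  assumes tau: "\<tau> > 0" and nu: "0 < \<nu>" "\<nu> \<le> 1" and r: "0 < r" "r \<le> 1"
  shows "\<exists>v\<in>B1. Lpop \<nu> \<tau> v < Lpop \<nu> \<tau> (vector [r, 0])"
proof -
  define I where "I x y = (if y * (r * x$1) < \<tau> then 1 else (0::real))" for x :: point and y :: real
  define A1 where "A1 = avg \<nu> (\<lambda>x y. y * x$1 * I x y)"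
  define A2 where "A2 = avg \<nu> (\<lambda>x y. y * x$2 * I x y)"
  have [measurable]: "A1 \<in> borel_measurable borel"
    unfolding A1_def I_def by measurable
  have [measurable]: "A2 \<in> borel_measurable borel"
    unfolding A2_def I_def by measurable
  have A1b: "\<bar>A1 x\<bar> \<le> 1" if "x \<in> B1" for x
    unfolding A1_def using nu B1_comp[OF that, of 1] by (intro avg_bnd) (auto simp: abs_mult I_def)
  have A2b: "\<bar>A2 x\<bar> \<le> 1" if "x \<in> B1" for x
    unfolding A2_def using nu B1_comp[OF that, of 2] by (intro avg_bnd) (auto simp: abs_mult I_def)
  have iA1: "integrable unifB1 A1" by (rule integrable_unif[OF _ A1b]) simp
  have iA2: "integrable unifB1 A2" by (rule integrable_unif[OF _ A2b]) simp
  define Q where "Q = (\<integral>x. A2 x \<partial>unifB1)"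
  define K1 where "K1 = (\<integral>x. A1 x \<partial>unifB1)"
  have Qn: "Q < 0" unfolding Q_def A2_def I_def using Qneg[OF tau nu r(1)] by simp
  have K1b: "\<bar>K1\<bar> \<le> 1" unfolding K1_def by (rule int_abs_le[OF iA1 A1b])
  define s where "s = min 1 (-Q/2)"
  have s: "0 < s" "s \<le> 1" "s \<le> -Q/2" using Qn by (auto simp: s_def)
  define K where "K = -s * K1 - Q"
  have Kp: "K \<ge> -Q/2"
  proof -
    have "s * K1 \<le> s * 1" using K1b s by (intro mult_left_mono) auto
    then show ?thesis unfolding K_def using s by linarith
  qed
  have Kpos: "K > 0" using Kp Qn by linarith
  define lam where "lam = measure lborel B1"
  have lam: "lam > 0" unfolding lam_def by (rule lam_pos)
  define t where "t = min (r * s) (K * r * lam / 128)"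
  have t: "t > 0" "t \<le> r * s" "t \<le> K * r * lam / 128" using r s Kpos lam by (auto simp: t_def)
  define d :: point where "d = vector [-s, -1]"
  define w :: point where "w = vector [r, 0]"
  define v :: point where "v = vector [r - t * s, -t]"
  have dx: "d \<bullet> x = -s * x$1 - x$2" for x by (simp add: d_def vec2_inner)
  have wx: "w \<bullet> x = r * x$1" for x by (simp add: w_def vec2_inner)
  have vx: "v \<bullet> x = r * x$1 + t * (d \<bullet> x)" for x by (simp add: v_def dx vec2_inner algebra_simps)
  have vB: "v \<in> B1"
  proof -
    have ts: "t * t \<le> t * (r * s)" using t by (intro mult_left_mono) auto
    have "(r - t * s)^2 + (-t)^2 = r^2 - 2 * r * (t * s) + (t * t) * (s * s) + t * t"
      by (simp add: power2_eq_square algebra_simps)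
    also have "\<dots> \<le> r^2 - 2 * r * (t * s) + (t * t) * 1 + t * t"
      using s t by (intro add_mono mult_left_mono) (auto simp: mult_le_one)
    also have "\<dots> \<le> r^2" using ts by (simp add: algebra_simps)
    also have "\<dots> \<le> 1" using r by (simp add: power_le_one)
    finally show ?thesis unfolding v_def mem_cball_0 vec_B1 .
  qed
  define S1 where "S1 = {x::point. \<bar>x$1 - \<tau>/r\<bar> \<le> 2*t/r}"
  define S2 where "S2 = {x::point. \<bar>x$1 - (-\<tau>/r)\<bar> \<le> 2*t/r}"
  have [measurable]: "S1 \<in> sets borel" "S2 \<in> sets borel" unfolding S1_def S2_def by measurable
  define AK where "AK = avg \<nu> (\<lambda>x y. y * (d \<bullet> x) * I x y)"
  have AK_eq: "AK x = -s * A1 x - A2 x" for x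
    unfolding AK_def A1_def A2_def avg_def dx by (simp add: algebra_simps)
  have intK: "(\<integral>x. AK x \<partial>unifB1) = K"
    unfolding AK_eq K_def K1_def Q_def using iA1 iA2 by simp
  have pw: "avg \<nu> (\<lambda>x y. hinge \<tau> v x y) x - avg \<nu> (\<lambda>x y. hinge \<tau> w x y) x
      \<le> -(t/\<tau>) * AK x + (4*t/\<tau>) * indicator (S1 \<union> S2) x" if x: "x \<in> B1" for x
  proof -
    have dxb: "\<bar>d \<bullet> x\<bar> \<le> 2"
    proof -
      have "\<bar>s * x$1\<bar> \<le> 1" using s B1_comp[OF x, of 1] by (simp add: abs_mult mult_le_one)
      then show ?thesis using B1_comp[OF x, of 2] unfolding dx by linarith
    qed
    have one: "hinge \<tau> v x y - hinge \<tau> w x y \<le> -(t/\<tau>) * (y * (d \<bullet> x) * I x y) + (4*t/\<tau>) * indicator (S1 \<union> S2) x"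
      if y: "y = -1 \<or> y = 1" for y
    proof -
      have b: "\<bar>y * (d \<bullet> x)\<bar> \<le> 2" using y dxb by auto
      have hv: "hinge \<tau> v x y = max 0 (1 - (y * (r * x$1) + t * (y * (d \<bullet> x))) / \<tau>)"
        unfolding hinge_def vx by (simp add: algebra_simps)
      have hw: "hinge \<tau> w x y = max 0 (1 - y * (r * x$1) / \<tau>)"
        unfolding hinge_def wx by simp
      have st: "hinge \<tau> v x y - hinge \<tau> w x y \<le> -(t/\<tau>) * (y * (d \<bullet> x)) * (if y * (r * x$1) < \<tau> then 1 else 0)
          + (2*t*2/\<tau>) * (if \<bar>y * (r * x$1) - \<tau>\<bar> \<le> t*2 then 1 else 0)"
        unfolding hv hw by (rule hinge_step[OF tau t(1) b])
      have band: "(if \<bar>y * (r * x$1) - \<tau>\<bar> \<le> t*2 then 1 else (0::real)) \<le> indicator (S1 \<union> S2) x"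
      proof (cases "\<bar>y * (r * x$1) - \<tau>\<bar> \<le> t*2")
        case True
        have "x \<in> S1 \<union> S2"
          using y
        proof
          assume y1: "y = -1"
          have "(-1) * (r*x$1) - \<tau> = -(r*x$1 + \<tau>)" by simp
          then have h1: "\<bar>r * x$1 + \<tau>\<bar> \<le> t*2" using True y1 by (metis abs_minus_cancel)
          have "x$1 - (-\<tau>/r) = (r*x$1 + \<tau>)/r" using r by (simp add: field_simps)
          then have "\<bar>x$1 - (-\<tau>/r)\<bar> = \<bar>r*x$1 + \<tau>\<bar> / r" using r by simp
          also have "\<dots> \<le> (t*2) / r" using h1 r by (intro divide_right_mono) auto
          finally show ?thesis by (simp add: S2_def mult.commute)
        next
          assume y1: "y = 1"
          then have h1: "\<bar>r * x$1 - \<tau>\<bar> \<le> t*2" using True by simp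
          have "x$1 - \<tau>/r = (r*x$1 - \<tau>)/r" using r by (simp add: field_simps)
          then have "\<bar>x$1 - \<tau>/r\<bar> = \<bar>r*x$1 - \<tau>\<bar> / r" using r by simp
          also have "\<dots> \<le> (t*2) / r" using h1 r by (intro divide_right_mono) auto
          finally show ?thesis by (simp add: S1_def mult.commute)
        qed
        then show ?thesis by simp
      qed simp
      have "(4*t/\<tau>) * (if \<bar>y * (r * x$1) - \<tau>\<bar> \<le> t*2 then 1 else 0) \<le> (4*t/\<tau>) * indicator (S1 \<union> S2) x"
        using band t tau by (intro mult_left_mono) auto
      then show ?thesis using st unfolding I_def by simp
    qed
    define RT where "RT = -(t/\<tau>) * (lab x True * (d \<bullet> x) * I x (lab x True)) + (4*t/\<tau>) * indicator (S1 \<union> S2) x"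
    define RF where "RF = -(t/\<tau>) * (lab x False * (d \<bullet> x) * I x (lab x False)) + (4*t/\<tau>) * indicator (S1 \<union> S2) x"
    have "avg \<nu> (\<lambda>x y. hinge \<tau> v x y) x - avg \<nu> (\<lambda>x y. hinge \<tau> w x y) x
        = \<nu> * (hinge \<tau> v x (lab x True) - hinge \<tau> w x (lab x True)) + (1 - \<nu>) * (hinge \<tau> v x (lab x False) - hinge \<tau> w x (lab x False))"
      by (simp add: avg_def algebra_simps)
    also have "\<dots> \<le> \<nu> * RT + (1 - \<nu>) * RF"
      unfolding RT_def RF_def using nu one[OF lab_cases[of x True]] one[OF lab_cases[of x False]]
      by (intro add_mono mult_left_mono) auto
    also have "\<nu> * RT + (1 - \<nu>) * RF = -(t/\<tau>) * AK x + (4*t/\<tau>) * indicator (S1 \<union> S2) x"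
      unfolding RT_def RF_def AK_def avg_def using tau by (simp add: field_simps)
    finally show ?thesis .
  qed
  have ihv: "integrable unifB1 (avg \<nu> (\<lambda>x y. hinge \<tau> v x y))" by (rule hinge_avg_int) (use tau nu in auto)
  have ihw: "integrable unifB1 (avg \<nu> (\<lambda>x y. hinge \<tau> w x y))" by (rule hinge_avg_int) (use tau nu in auto)
  have iAK: "integrable unifB1 AK" unfolding AK_eq using iA1 iA2 by simp
  have iS: "integrable unifB1 (indicator (S1 \<union> S2) :: point \<Rightarrow> real)"
  proof -
    interpret prob_space unifB1 by (rule prob_unif)
    show ?thesis by (intro integrable_real_indicator) (auto simp: less_top[symmetric])
  qed
  have "Lpop \<nu> \<tau> v - Lpop \<nu> \<tau> w = (\<integral>x. avg \<nu> (\<lambda>x y. hinge \<tau> v x y) x - avg \<nu> (\<lambda>x y. hinge \<tau> w x y) x \<partial>unifB1)"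
    unfolding Lpop_def using ihv ihw by simp
  also have "\<dots> \<le> (\<integral>x. -(t/\<tau>) * AK x + (4*t/\<tau>) * indicator (S1 \<union> S2) x \<partial>unifB1)"
    by (rule int_mono_B1[OF _ _ pw]) (use ihv ihw iAK iS in auto)
  also have "\<dots> = -(t/\<tau>) * K + (4*t/\<tau>) * measure unifB1 (S1 \<union> S2)"
    using iAK iS intK by simp
  also have "measure unifB1 (S1 \<union> S2) \<le> 16 * t / (r * lam)"
  proof -
    have "measure unifB1 (S1 \<union> S2) \<le> measure unifB1 S1 + measure unifB1 S2"
      by (rule measure_Un_le) auto
    also have "\<dots> \<le> 4 * (2*t/r) / lam + 4 * (2*t/r) / lam"
      unfolding S1_def S2_def lam_def using t r
      by (intro add_mono strip_bound) auto
    also have "\<dots> = 16 * t / (r * lam)" by (simp add: field_simps)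
    finally show ?thesis .
  qed
  then have "-(t/\<tau>) * K + (4*t/\<tau>) * measure unifB1 (S1 \<union> S2) \<le> -(t/\<tau>) * K + (4*t/\<tau>) * (16 * t / (r * lam))"
    using t tau by (intro add_left_mono mult_left_mono) auto
  also have "\<dots> = (t/\<tau>) * (64 * t / (r * lam) - K)" using tau r lam by (simp add: field_simps)
  also have "\<dots> \<le> (t/\<tau>) * (K/2 - K)"
  proof -
    have "t * 128 \<le> K * r * lam" using t by simp
    then have "64 * t / (r * lam) \<le> K / 2" using r lam by (simp add: field_simps mult.assoc mult.left_commute)
    then show ?thesis using t tau by (intro mult_left_mono) auto
  qed
  also have "\<dots> < 0" using t tau Kpos by (simp add: mult_pos_neg)
  finally show ?thesis using vB unfolding w_def by auto
qed

definition phi :: "point \<Rightarrow> point \<Rightarrow> real" where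
  "phi w x = min 1 (max 0 (x$1)) * min 1 (max 0 (-(w \<bullet> x)))"

definition Psi :: "point \<Rightarrow> real" where
  "Psi w = (\<integral>x. phi w x \<partial>unifB1)"

lemma phi_meas[measurable]: "phi w \<in> borel_measurable borel"
  unfolding phi_def by measurable

lemma phi_bnd: "0 \<le> phi w x" "phi w x \<le> 1"
  unfolding phi_def by (auto intro: mult_le_one)

lemma phi_lip: "x \<in> B1 \<Longrightarrow> \<bar>phi w x - phi v x\<bar> \<le> norm (w - v)"
proof -
  assume x: "x \<in> B1"
  define a where "a = min 1 (max 0 (x$1))"
  have a: "0 \<le> a" "a \<le> 1" by (auto simp: a_def)
  define m where "m u = min 1 (max 0 (-(u \<bullet> x)))" for u
  have "\<bar>m w - m v\<bar> \<le> \<bar>w \<bullet> x - v \<bullet> x\<bar>" unfolding m_def min_def max_def by auto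
  also have "\<dots> = \<bar>(w - v) \<bullet> x\<bar>" by (simp add: inner_diff_left)
  also have "\<dots> \<le> norm (w - v)" by (rule B1_inner[OF x])
  finally have mm: "\<bar>m w - m v\<bar> \<le> norm (w - v)" .
  have "\<bar>phi w x - phi v x\<bar> = a * \<bar>m w - m v\<bar>"
    unfolding phi_def a_def[symmetric] m_def[symmetric] using a
    by (simp add: abs_mult right_diff_distrib[symmetric])
  also have "\<dots> \<le> 1 * norm (w - v)" using a mm by (intro mult_mono) auto
  finally show ?thesis by simp
qed

lemma phi_int: "integrable unifB1 (phi w)"
  by (rule integrable_unif[where C=1]) (use phi_bnd in auto)

lemma Psi_lip: "\<bar>Psi w - Psi v\<bar> \<le> norm (w - v)"
proof -
  have "Psi w - Psi v = (\<integral>x. phi w x - phi v x \<partial>unifB1)"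
    unfolding Psi_def using phi_int by simp
  also have "\<bar>\<dots>\<bar> \<le> norm (w - v)"
    by (rule int_abs_le) (use phi_int phi_lip in auto)
  finally show ?thesis .
qed

lemma Psi_cont: "continuous_on UNIV Psi"
proof (rule continuous_on_iff[THEN iffD2], intro ballI allI impI)
  fix w :: point and e :: real assume e: "e > 0"
  show "\<exists>d>0. \<forall>v\<in>UNIV. dist v w < d \<longrightarrow> dist (Psi v) (Psi w) < e"
  proof (intro exI[of _ e] conjI ballI impI)
    show "e > 0" by (rule e)
    fix v :: point assume "dist v w < e"
    then show "dist (Psi v) (Psi w) < e"
      using Psi_lip[of v w] by (simp add: dist_norm dist_real_def)
  qed
qed

lemma Psi_pos:
  assumes "w \<noteq> 0" "\<not> (w$2 = 0 \<and> w$1 > 0)"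
  shows "Psi w > 0"
proof -
  obtain p :: point where p: "norm p < 1" "p$1 > 0" "w \<bullet> p < 0"
  proof (cases "w$2 = 0")
    case True
    then have "w$1 \<noteq> 0" using assms(1) by (metis (mono_tags) exhaust_2 vec_eq_iff zero_index)
    then have w1: "w$1 < 0" using True assms(2) by linarith
    have "norm (vector [1/2, 0] :: point) ^ 2 < 1" by (simp only: norm2_sq vector_2) (simp add: power2_eq_square)
    then have "norm (vector [1/2, 0] :: point) < 1" using abs_square_less_1[of "norm (vector [1/2, 0] :: point)"] by simp
    moreover have "w \<bullet> (vector [1/2, 0] :: point) < 0" using w1 True by (simp add: inner2 vector_2)
    ultimately show ?thesis using that[of "vector [1/2, 0]"] by (simp add: vector_2)
  next
    case False
    define c where "c = (if w$2 > 0 then -1/2 else (1/2::real))"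
    have c: "w$2 * c = -\<bar>w$2\<bar>/2" "\<bar>c\<bar> = 1/2" using False by (auto simp: c_def)
    define q where "q = min (1/4) (\<bar>w$2\<bar> / (4 * (\<bar>w$1\<bar> + 1)))"
    have q: "0 < q" "q \<le> 1/4" using False unfolding q_def by (auto simp: min_def)
    have "\<bar>w$1\<bar> * q \<le> \<bar>w$1\<bar> * (\<bar>w$2\<bar> / (4 * (\<bar>w$1\<bar> + 1)))"
      by (intro mult_left_mono) (auto simp: q_def)
    also have "\<dots> \<le> \<bar>w$2\<bar> / 4"
    proof -
      have "\<bar>w$1\<bar> / (\<bar>w$1\<bar> + 1) \<le> 1" by simp
      then have "\<bar>w$1\<bar> / (\<bar>w$1\<bar> + 1) * (\<bar>w$2\<bar> / 4) \<le> 1 * (\<bar>w$2\<bar> / 4)"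
        by (intro mult_right_mono) auto
      then show ?thesis by (simp add: field_simps)
    qed
    finally have wq: "\<bar>w$1\<bar> * q \<le> \<bar>w$2\<bar> / 4" .
    have "w$1 * q \<le> \<bar>w$1\<bar> * q" using q by (simp add: mult_right_mono)
    then have "w \<bullet> (vector [q, c] :: point) < 0"
      using wq c False by (simp add: inner2 vector_2)
    moreover have "norm (vector [q, c] :: point) < 1"
    proof -
      have "q^2 \<le> (1/4)^2" using q by (intro power_mono) auto
      moreover have "c^2 = 1/4" by (auto simp: c_def power2_eq_square)
      ultimately have "norm (vector [q, c] :: point) ^ 2 < 1" by (simp only: norm2_sq vector_2) (simp add: power2_eq_square)
      then show ?thesis using abs_square_less_1[of "norm (vector [q, c] :: point)"] by simp
    qed
    ultimately show ?thesis using that[of "vector [q, c]"] q by (simp add: vector_2)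
  qed
  show ?thesis
    unfolding Psi_def
  proof (rule integral_pos[where C=1 and g="phi w" and p=p])
    show "continuous_on UNIV (phi w)" unfolding phi_def by (intro continuous_intros)
    show "0 < phi w p" using p by (simp add: phi_def)
  qed (use p phi_bnd in auto)
qed

lemma distr_DD_fst: "distr (DD \<nu>) borel fst = unifB1"
proof -
  have "distr (DD \<nu>) borel fst = distr (PP \<nu>) borel (fst \<circ> lab2)"
    unfolding DD_def by (rule distr_distr) auto
  also have "\<dots> = distr (unifB1 \<Otimes>\<^sub>M measure_pmf (bernoulli_pmf \<nu>)) unifB1 fst"
    unfolding PP_def by (rule distr_cong) (auto simp: lab2_def split: prod.splits)
  also have "\<dots> = unifB1" by (rule measure_pmf.distr_pair_fst)
  finally show ?thesis .
qed

lemma measure_DD_A1: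
  assumes nu: "0 \<le> \<nu>" "\<nu> \<le> 1" and A[measurable]: "A \<in> sets borel"
  shows "measure (DD \<nu>) (A \<times> {1}) = (\<integral>x. indicator A x * eta \<nu> x \<partial>unifB1)"
proof -
  have S[measurable]: "A \<times> {1::real} \<in> sets (borel \<Otimes>\<^sub>M borel)" by measurable
  have "measure (DD \<nu>) (A \<times> {1}) = integral\<^sup>L (DD \<nu>) (indicator (A \<times> {1}))"
    by simp
  also have "\<dots> = (\<integral>x. avg \<nu> (\<lambda>x y. indicator (A \<times> {1}) (x, y)) x \<partial>unifB1)"
    by (rule ED[OF nu, where C=1]) (auto simp: indicator_def)
  also have "\<dots> = (\<integral>x. indicator A x * eta \<nu> x \<partial>unifB1)"
    by (intro Bochner_Integration.integral_cong refl)
       (auto simp: avg_def lab_def eta_def indicator_def)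
  finally show ?thesis .
qed

lemma h_meas[measurable]: "(\<lambda>x. h w x) \<in> borel_measurable borel"
  unfolding h_def by measurable

definition errf :: "point \<Rightarrow> point \<Rightarrow> real \<Rightarrow> real" where
  "errf w x y = (if h w x \<noteq> y then 1 else 0)"

lemma err_DD:
  assumes nu: "0 \<le> \<nu>" "\<nu> \<le> 1"
  shows "err (DD \<nu>) w = (\<integral>x. avg \<nu> (errf w) x \<partial>unifB1)"
proof -
  have S0: "{p \<in> space (borel \<Otimes>\<^sub>M borel). h w (fst p) \<noteq> (snd p :: real)} \<in> sets (borel \<Otimes>\<^sub>M borel)"
    unfolding h_def by measurable
  have S[measurable]: "{p :: point \<times> real. h w (fst p) \<noteq> snd p} \<in> sets (borel \<Otimes>\<^sub>M borel)"
    using S0 by (simp add: space_pair_measure)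
  have "err (DD \<nu>) w = integral\<^sup>L (DD \<nu>) (indicator {p. h w (fst p) \<noteq> snd p})"
    unfolding err_def by simp
  also have "\<dots> = (\<integral>x. avg \<nu> (\<lambda>x y. indicator {p. h w (fst p) \<noteq> snd p} (x, y)) x \<partial>unifB1)"
    by (rule ED[OF nu, where C=1]) (auto simp: indicator_def)
  also have "\<dots> = (\<integral>x. avg \<nu> (errf w) x \<partial>unifB1)"
    by (intro Bochner_Integration.integral_cong refl) (auto simp: avg_def errf_def indicator_def)
  finally show ?thesis .
qed

lemma errf_meas[measurable]: "(\<lambda>x. errf w x (lab x b)) \<in> borel_measurable borel"
  unfolding errf_def by measurable

lemma AE_x1: "AE x in unifB1. x$1 \<noteq> 0"
proof -
  have "AE x in lborel. (x::point) \<bullet> axis 1 1 \<noteq> 0"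
    by (rule AE_lborel_inner_neq) (auto simp: Basis_vec_def)
  then have "AE x in lborel. x \<in> B1 \<longrightarrow> x$1 \<noteq> 0" by (auto simp: inner_axis elim: eventually_mono)
  then show ?thesis unfolding unifB1_def by (intro AE_uniform_measureI) auto
qed

lemma exc_bound:
  assumes nu: "0 < \<nu>" "\<nu> < 1/2"
  shows "err (DD \<nu>) w - err (DD \<nu>) (vector [1, 0]) \<ge> (1 - 2*\<nu>) * Psi w"
proof -
  let ?e = "vector [1, 0] :: point"
  have nu': "0 \<le> \<nu>" "\<nu> \<le> 1" using nu by auto
  have iw: "integrable unifB1 (avg \<nu> (errf w))"
    by (rule avg_int[where C=1]) (use nu' in \<open>auto simp: errf_def\<close>)
  have ie: "integrable unifB1 (avg \<nu> (errf ?e))"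
    by (rule avg_int[where C=1]) (use nu' in \<open>auto simp: errf_def\<close>)
  have pw: "(1 - 2*\<nu>) * phi w x \<le> avg \<nu> (errf w) x - avg \<nu> (errf ?e) x" if x1: "x$1 \<noteq> 0" for x
  proof (cases "x$1 > 0")
    case True
    have he: "h ?e x = 1" using True by (simp add: h_def inner2 vector_2)
    have e: "avg \<nu> (errf ?e) x = \<nu> * (if x$2 > 0 then 1 else 0)"
      using True by (simp add: avg_def errf_def he lab_def)
    consider "w \<bullet> x < 0" | "w \<bullet> x = 0" | "w \<bullet> x > 0" by linarith
    then show ?thesis
    proof cases
      case 1
      have hw: "h w x = -1" using 1 by (simp add: h_def)
      have "avg \<nu> (errf w) x \<ge> 1 - \<nu>"
        using True nu by (auto simp: avg_def errf_def hw lab_def)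
      moreover have "(1 - 2*\<nu>) * phi w x \<le> 1 - 2*\<nu>"
        using mult_left_mono[of "phi w x" 1 "1 - 2*\<nu>"] nu phi_bnd by simp
      moreover have "\<nu> * (if x$2 > 0 then 1 else 0) \<le> \<nu>" using nu by simp
      ultimately show ?thesis unfolding e by linarith
    next
      case 2
      have hw: "h w x = 0" using 2 by (simp add: h_def)
      have "phi w x = 0" using 2 by (simp add: phi_def)
      moreover have "avg \<nu> (errf w) x = 1" by (simp add: avg_def errf_def hw lab_def)
      ultimately show ?thesis unfolding e using nu by auto
    next
      case 3
      have hw: "h w x = 1" using 3 by (simp add: h_def)
      have "phi w x = 0" using 3 by (simp add: phi_def)
      moreover have "avg \<nu> (errf w) x = \<nu> * (if x$2 > 0 then 1 else 0)"
        using True by (simp add: avg_def errf_def hw lab_def)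
      ultimately show ?thesis unfolding e by simp
    qed
  next
    case False
    then have x1n: "x$1 < 0" using x1 by linarith
    have he: "h ?e x = -1" using x1n by (simp add: h_def inner2 vector_2)
    have e: "avg \<nu> (errf ?e) x = 0"
      using x1n by (simp add: avg_def errf_def he lab_def)
    have "phi w x = 0" using x1n by (simp add: phi_def)
    moreover have "avg \<nu> (errf w) x \<ge> 0" using nu by (auto simp: avg_def errf_def)
    ultimately show ?thesis unfolding e by simp
  qed
  have "(1 - 2*\<nu>) * Psi w = (\<integral>x. (1 - 2*\<nu>) * phi w x \<partial>unifB1)"
    unfolding Psi_def by simp
  also have "\<dots> \<le> (\<integral>x. avg \<nu> (errf w) x - avg \<nu> (errf ?e) x \<partial>unifB1)"
    by (rule integral_mono_AE) (use phi_int iw ie AE_x1 pw in \<open>auto elim: eventually_mono\<close>)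
  also have "\<dots> = err (DD \<nu>) w - err (DD \<nu>) ?e"
    using iw ie by (simp add: err_DD[OF nu'])
  finally show ?thesis .
qed

abbreviation PiD :: "real \<Rightarrow> nat \<Rightarrow> (nat \<Rightarrow> point \<times> real) measure" where
  "PiD \<nu> n \<equiv> PiM {..<n} (\<lambda>_. DD \<nu>)"

lemma prob_PiD: "prob_space (PiD \<nu> n)"
  by (intro prob_space_PiM prob_DD)

lemma hingep_meas[measurable]: "(\<lambda>p. hinge \<tau> u (fst p) (snd p)) \<in> borel_measurable (DD \<nu>)"
  unfolding hinge_def by measurable

lemma comp_meas: "i < n \<Longrightarrow> (\<lambda>S. S i) \<in> PiD \<nu> n \<rightarrow>\<^sub>M DD \<nu>"
  by (rule measurable_component_singleton) simp

lemma hingeS_meas: "i < n \<Longrightarrow> (\<lambda>S. hinge \<tau> u (fst (S i)) (snd (S i))) \<in> borel_measurable (PiD \<nu> n)"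
  using measurable_compose[OF comp_meas hingep_meas] by simp

lemma emp_meas: "(\<lambda>S. emp_hinge \<tau> n S u) \<in> borel_measurable (PiD \<nu> n)"
  unfolding emp_hinge_def
  by (intro borel_measurable_divide borel_measurable_sum hingeS_meas borel_measurable_const) auto

lemma indep_comp:
  assumes "n > 0"
  shows "prob_space.indep_vars (PiD \<nu> n) (\<lambda>_. DD \<nu>) (\<lambda>i S. S i) {..<n}"
proof -
  interpret prob_space "PiD \<nu> n" by (rule prob_PiD)
  have ne: "{..<n} \<noteq> {}" using assms by auto
  have rv: "random_variable (DD \<nu>) (\<lambda>S. S i)" if "i \<in> {..<n}" for i
    using comp_meas that by simp
  show ?thesis
  proof (subst indep_vars_iff_distr_eq_PiM[OF ne])
    show "random_variable (DD \<nu>) (\<lambda>S. S i)" for i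
    proof (cases "i < n")
      case True then show ?thesis using rv by simp
    next
      case False
      have "(\<lambda>S. undefined) \<in> PiD \<nu> n \<rightarrow>\<^sub>M DD \<nu>" by simp
      then show ?thesis
        by (rule measurable_cong[THEN iffD1, rotated]) (use False in \<open>auto simp: space_PiM PiE_iff extensional_def\<close>)
    qed
    show "distr (PiD \<nu> n) (Pi\<^sub>M {..<n} (\<lambda>i. DD \<nu>)) (\<lambda>x. restrict (\<lambda>i. x i) {..<n}) =
          Pi\<^sub>M {..<n} (\<lambda>i. distr (PiD \<nu> n) (DD \<nu>) (\<lambda>S. S i))"
    proof -
      have "distr (PiD \<nu> n) (Pi\<^sub>M {..<n} (\<lambda>i. DD \<nu>)) (\<lambda>x. restrict (\<lambda>i. x i) {..<n})
          = distr (PiD \<nu> n) (PiD \<nu> n) (\<lambda>x. x)"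
        by (rule distr_cong) (auto simp: space_PiM PiE_iff extensional_restrict)
      also have "\<dots> = PiD \<nu> n" by simp
      also have "\<dots> = Pi\<^sub>M {..<n} (\<lambda>i. distr (PiD \<nu> n) (DD \<nu>) (\<lambda>S. S i))"
        by (intro PiM_cong refl) (rule distr_PiM_component[symmetric], auto simp: prob_DD)
      finally show ?thesis .
    qed
  qed
qed

lemma hoeff_point:
  assumes tau: "\<tau> > 0" and nu: "0 \<le> \<nu>" "\<nu> \<le> 1" and u: "norm u \<le> 1" and n: "n > 0" and a: "a \<ge> 0"
  shows "measure (PiD \<nu> n) {S \<in> space (PiD \<nu> n). \<bar>emp_hinge \<tau> n S u - Lpop \<nu> \<tau> u\<bar> \<ge> a}
           \<le> 2 * exp (-2 * real n * a^2 / (1 + 1/\<tau> - 0)^2)"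
proof -
  define g where "g p = hinge \<tau> u (fst p) (snd p)" for p :: "point \<times> real"
  define X where "X i S = g (S i)" for i and S :: "nat \<Rightarrow> point \<times> real"
  have gm[measurable]: "g \<in> borel_measurable (DD \<nu>)" unfolding g_def by simp
  interpret prob_space "PiD \<nu> n" by (rule prob_PiD)
  have indep: "indep_vars (\<lambda>_. borel) X {..<n}"
    unfolding X_def by (rule indep_vars_compose2[OF indep_comp[OF n]]) simp
  have dX: "distr (PiD \<nu> n) borel (X i) = distr (DD \<nu>) borel g" if "i < n" for i
  proof -
    have "distr (PiD \<nu> n) borel (X i) = distr (PiD \<nu> n) borel (g \<circ> (\<lambda>S. S i))"
      by (simp add: X_def[abs_def] o_def)
    also have "\<dots> = distr (distr (PiD \<nu> n) (DD \<nu>) (\<lambda>S. S i)) borel g"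
      by (rule distr_distr[symmetric]) (use comp_meas that in auto)
    also have "distr (PiD \<nu> n) (DD \<nu>) (\<lambda>S. S i) = DD \<nu>"
      by (rule distr_PiM_component) (use that prob_DD in auto)
    finally show ?thesis .
  qed
  have Xm: "X i \<in> borel_measurable (PiD \<nu> n)" if "i < n" for i
    unfolding X_def using measurable_compose[OF comp_meas[OF that] gm] by simp
  have EX: "expectation (X 0) = Lpop \<nu> \<tau> u"
  proof -
    have "expectation (X 0) = integral\<^sup>L (distr (PiD \<nu> n) (DD \<nu>) (\<lambda>S. S 0)) g"
      unfolding X_def by (rule integral_distr[symmetric]) (use comp_meas n in auto)
    also have "distr (PiD \<nu> n) (DD \<nu>) (\<lambda>S. S 0) = DD \<nu>"
      by (rule distr_PiM_component) (use n prob_DD in auto)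
    also have "integral\<^sup>L (DD \<nu>) g = Lpop \<nu> \<tau> u"
    proof -
      have m: "(\<lambda>p. hinge \<tau> u (fst p) (snd p)) \<in> borel_measurable (borel \<Otimes>\<^sub>M borel)"
        unfolding hinge_def by measurable
      have bnd: "\<bar>hinge \<tau> u (fst (x, y)) (snd (x, y))\<bar> \<le> 1 + 1/\<tau>" if "x \<in> B1" "y \<in> {-1,1}" for x y
        using hinge_bnd[OF tau that u] by simp
      show ?thesis using ED[OF nu m bnd] unfolding Lpop_def g_def by simp
    qed
    finally show ?thesis .
  qed
  have AEg: "AE p in DD \<nu>. g p \<in> {0..1 + 1/\<tau>}"
    using AE_DD
  proof eventually_elim
    case (elim p)
    then show ?case using hinge_bnd[OF tau _ _ u, of "fst p" "snd p"] by (auto simp: g_def hinge_def)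
  qed
  have AEX: "AE S in PiD \<nu> n. X 0 S \<in> {0..1 + 1/\<tau>}"
    unfolding X_def by (rule AE_PiM_component[OF prob_DD]) (use n AEg in auto)
  interpret H: Hoeffding_ineq_iid "PiD \<nu> n" "{..<n}" X "X 0" 0 "1 + 1/\<tau>" "Lpop \<nu> \<tau> u"
  proof unfold_locales
    show "finite {..<n}" by simp
    show "indep_vars (\<lambda>_. borel) X {..<n}" by (rule indep)
    show "distr (PiD \<nu> n) borel (X i) = distr (PiD \<nu> n) borel (X 0)" if "i \<in> {..<n}" for i
      using dX[of i] dX[of 0] that n by simp
    show "random_variable borel (X 0)" using Xm n by simp
    show "AE S in PiD \<nu> n. X 0 S \<in> {0..1 + 1/\<tau>}" by (rule AEX)
    show "Lpop \<nu> \<tau> u \<equiv> expectation (X 0)" using EX by simp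
  qed
  have "prob {S \<in> space (PiD \<nu> n). \<bar>(\<Sum>i\<in>{..<n}. X i S) / real (card {..<n}) - Lpop \<nu> \<tau> u\<bar> \<ge> a}
        \<le> 2 * exp (-2 * real (card {..<n}) * a^2 / (1 + 1/\<tau> - 0)^2)"
  proof (rule H.Hoeffding_ineq_abs_ge'[OF a])
    show "0 < 1 + 1/\<tau>" using tau by (metis add_pos_pos divide_pos_pos zero_less_one)
    show "{..<n} \<noteq> {}" using n by auto
  qed
  then show ?thesis by (simp add: X_def g_def emp_hinge_def)
qed

lemma emp_lip:
  assumes tau: "\<tau> > 0" and n: "n > 0" and S: "\<forall>i<n. fst (S i) \<in> B1 \<and> snd (S i) \<in> {-1,1}"
  shows "\<bar>emp_hinge \<tau> n S w - emp_hinge \<tau> n S v\<bar> \<le> norm (w - v) / \<tau>"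
proof -
  have "emp_hinge \<tau> n S w - emp_hinge \<tau> n S v
      = (\<Sum>i<n. hinge \<tau> w (fst (S i)) (snd (S i)) - hinge \<tau> v (fst (S i)) (snd (S i))) / real n"
    unfolding emp_hinge_def by (simp add: sum_subtractf diff_divide_distrib)
  also have "\<bar>\<dots>\<bar> = \<bar>\<Sum>i<n. hinge \<tau> w (fst (S i)) (snd (S i)) - hinge \<tau> v (fst (S i)) (snd (S i))\<bar> / real n"
    by simp
  also have "\<dots> \<le> (\<Sum>i<n. norm (w - v) / \<tau>) / real n"
  proof (intro divide_right_mono order_trans[OF sum_abs] sum_mono)
    fix i assume "i \<in> {..<n}"
    then show "\<bar>hinge \<tau> w (fst (S i)) (snd (S i)) - hinge \<tau> v (fst (S i)) (snd (S i))\<bar> \<le> norm (w - v) / \<tau>"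
      using S hinge_lip[OF tau] by auto
  qed simp
  also have "\<dots> = norm (w - v) / \<tau>" using n by simp
  finally show ?thesis .
qed

lemma pop_gap:
  assumes tau: "\<tau> > 0" and nu: "0 < \<nu>" "\<nu> < 1/2"
  shows "\<exists>w0 \<gamma> \<psi>0. w0 \<in> B1 \<and> \<gamma> > 0 \<and> \<psi>0 > 0 \<and> (\<forall>v\<in>B1. Lpop \<nu> \<tau> w0 \<le> Lpop \<nu> \<tau> v) \<and>
      (\<forall>w\<in>B1. Psi w \<le> \<psi>0/2 \<longrightarrow> Lpop \<nu> \<tau> w \<ge> Lpop \<nu> \<tau> w0 + \<gamma>)"
proof -
  let ?L = "Lpop \<nu> \<tau>"
  have cL: "continuous_on UNIV ?L" using Lpop_cont[OF tau] nu by simp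
  have cB: "compact B1" by simp
  obtain w0 where w0: "w0 \<in> B1" "\<forall>y\<in>B1. ?L w0 \<le> ?L y"
    using continuous_attains_inf[OF cB _ continuous_on_subset[OF cL]] by force
  define M where "M = B1 \<inter> {w. ?L w = ?L w0}"
  have cM: "compact M" unfolding M_def
    by (intro compact_Int_closed cB closed_Collect_eq cL continuous_on_const)
  have w0M: "w0 \<in> M" using w0 by (simp add: M_def)
  have good: "w \<noteq> 0 \<and> \<not> (w$2 = 0 \<and> w$1 > 0)" if w: "w \<in> M" for w
  proof
    show "w \<noteq> 0"
    proof
      assume "w = 0"
      have "0 \<le> \<nu>" using nu by simp
      from descent_0[OF tau this nu(2)] obtain v where "v \<in> B1" "?L v < ?L 0" by blast
      moreover have "?L w0 \<le> ?L v" using w0(2) \<open>v \<in> B1\<close> by blast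
      moreover have "?L 0 = ?L w0" using w \<open>w = 0\<close> by (simp add: M_def)
      ultimately show False by linarith
    qed
    show "\<not> (w$2 = 0 \<and> w$1 > 0)"
    proof
      assume h: "w$2 = 0 \<and> w$1 > 0"
      have wv: "w = vector [w$1, 0]" using h by (simp add: vec_eq_iff forall_2 vector_2)
      have "w$1 \<le> 1" using B1_comp[of w 1] w by (auto simp: M_def)
      moreover have "\<nu> \<le> 1" using nu by simp
      ultimately obtain v where "v \<in> B1" "?L v < ?L (vector [w$1, 0])"
        using descent_r[OF tau nu(1) _ _ ] h by blast
      moreover have "?L w0 \<le> ?L v" using w0(2) \<open>v \<in> B1\<close> by blast
      moreover have "?L w = ?L w0" using w by (simp add: M_def)
      ultimately show False using wv by simp
    qed
  qed
  obtain wm where wm: "wm \<in> M" "\<forall>y\<in>M. Psi wm \<le> Psi y"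
    using continuous_attains_inf[OF cM _ continuous_on_subset[OF Psi_cont]] w0M by force
  define \<psi>0 where "\<psi>0 = Psi wm"
  have psi0: "\<psi>0 > 0" unfolding \<psi>0_def using good[OF wm(1)] by (intro Psi_pos) auto
  define Kc where "Kc = B1 \<inter> {w. Psi w \<le> \<psi>0/2}"
  have cK: "compact Kc" unfolding Kc_def
    by (intro compact_Int_closed cB closed_Collect_le Psi_cont continuous_on_const)
  show ?thesis
  proof (cases "Kc = {}")
    case True
    then show ?thesis using w0 psi0 by (intro exI[of _ w0] exI[of _ 1] exI[of _ \<psi>0]) (auto simp: Kc_def)
  next
    case False
    obtain wk where wk: "wk \<in> Kc" "\<forall>y\<in>Kc. ?L wk \<le> ?L y"
      using continuous_attains_inf[OF cK False continuous_on_subset[OF cL]] by force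
    have "wk \<notin> M"
    proof
      assume "wk \<in> M"
      then have "Psi wm \<le> Psi wk" using wm by auto
      then show False using wk psi0 by (auto simp: Kc_def \<psi>0_def)
    qed
    moreover have "wk \<in> B1" using wk by (auto simp: Kc_def)
    ultimately have gt: "?L wk > ?L w0" using w0 by (force simp: M_def)
    have P: "\<forall>w\<in>B1. Psi w \<le> \<psi>0/2 \<longrightarrow> ?L w \<ge> ?L w0 + (?L wk - ?L w0)"
    proof (intro ballI impI)
      fix w assume "w \<in> B1" "Psi w \<le> \<psi>0/2"
      then have "w \<in> Kc" by (simp add: Kc_def)
      then show "?L w0 + (?L wk - ?L w0) \<le> ?L w" using wk by auto
    qed
    have "0 < ?L wk - ?L w0" using gt by simp
    then show ?thesis using w0 psi0 P by blast
  qed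
qed

lemma exp_neg_bound: "z > 0 \<Longrightarrow> exp (- z) \<le> 1 / z" for z :: real
proof -
  assume z: "z > 0"
  have "z < exp z" using exp_ge_add_one_self[of z] by linarith
  then have "1 / exp z \<le> 1 / z" using z by (intro divide_left_mono) auto
  then show ?thesis by (simp add: exp_minus field_simps)
qed

lemma unif_conv:
  assumes tau: "\<tau> > 0" and nu: "0 \<le> \<nu>" "\<nu> \<le> 1" and g: "\<gamma> > 0" and d: "\<delta> > 0"
  shows "\<exists>m. \<forall>n\<ge>m. n > 0 \<and> (\<exists>E\<in>sets (PiD \<nu> n). measure (PiD \<nu> n) E \<ge> 1 - \<delta> \<and>
     (\<forall>S\<in>E. (\<forall>i<n. fst (S i) \<in> B1 \<and> snd (S i) \<in> {-1,1}) \<and>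
        (\<forall>w\<in>B1. \<bar>emp_hinge \<tau> n S w - Lpop \<nu> \<tau> w\<bar> < \<gamma>/2)))"
proof -
  define \<rho> where "\<rho> = \<gamma> * \<tau> / 8"
  have rho: "\<rho> > 0" using g tau by (simp add: \<rho>_def)
  have tb: "\<forall>e>0. \<exists>k. finite k \<and> k \<subseteq> B1 \<and> B1 \<subseteq> (\<Union>x\<in>k. ball x e)"
    by (rule seq_compact_imp_totally_bounded) (rule compact_imp_seq_compact, simp)
  then have "\<exists>k. finite k \<and> k \<subseteq> B1 \<and> B1 \<subseteq> (\<Union>x\<in>k. ball x \<rho>)" using rho by simp
  then obtain N where N: "finite N" "N \<subseteq> B1" "B1 \<subseteq> (\<Union>u\<in>N. ball u \<rho>)"
    by (elim exE conjE) simp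
  define B where "B = 1 + 1/\<tau>"
  have Bp: "B > 0" using tau by (simp add: B_def add_pos_pos)
  define c where "c = (\<gamma>/4)^2 / B^2"
  have cp: "c > 0" using g Bp by (simp add: c_def)
  define m where "m = nat \<lceil>real (card N) / (c * \<delta>)\<rceil> + 1"
  show ?thesis
  proof (intro exI[of _ m] allI impI)
    fix n assume nm: "m \<le> n"
    have n: "n > 0" using nm by (simp add: m_def)
    have nbig: "real (card N) / (c * \<delta>) \<le> real n"
    proof -
      have "real (card N) / (c * \<delta>) \<le> real (nat \<lceil>real (card N) / (c * \<delta>)\<rceil>)"
        by (rule real_nat_ceiling_ge)
      also have "\<dots> \<le> real n"
      proof -
        have "nat \<lceil>real (card N) / (c * \<delta>)\<rceil> \<le> n" using nm unfolding m_def by linarith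
        then show ?thesis by (rule of_nat_mono)
      qed
      finally show ?thesis .
    qed
    let ?P = "PiD \<nu> n"
    interpret prob_space ?P by (rule prob_PiD)
    define G where "G = {S \<in> space ?P. \<forall>i\<in>{..<n}. fst (S i) \<in> B1 \<and> snd (S i) \<in> {-1,1}}"
    define Bad where "Bad u = {S \<in> space ?P. \<bar>emp_hinge \<tau> n S u - Lpop \<nu> \<tau> u\<bar> \<ge> \<gamma>/4}" for u
    define Good where "Good = {S \<in> space ?P. \<forall>u\<in>N. \<bar>emp_hinge \<tau> n S u - Lpop \<nu> \<tau> u\<bar> < \<gamma>/4}"
    define E where "E = G \<inter> Good"
    have Pset0: "{p \<in> space (DD \<nu>). fst p \<in> B1 \<and> snd p \<in> {-1,1::real}} \<in> sets (DD \<nu>)"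
      by measurable
    have Gi: "{S \<in> space ?P. fst (S i) \<in> B1 \<and> snd (S i) \<in> {-1,1}} \<in> sets ?P" if "i \<in> {..<n}" for i
    proof -
      have "(\<lambda>S. S i) -` {p \<in> space (DD \<nu>). fst p \<in> B1 \<and> snd p \<in> {-1,1::real}} \<inter> space ?P \<in> sets ?P"
        using measurable_sets[OF comp_meas Pset0] that by simp
      moreover have "(\<lambda>S. S i) -` {p \<in> space (DD \<nu>). fst p \<in> B1 \<and> snd p \<in> {-1,1::real}} \<inter> space ?P
          = {S \<in> space ?P. fst (S i) \<in> B1 \<and> snd (S i) \<in> {-1,1}}" by auto
      ultimately show ?thesis by simp
    qed
    have Gm: "G \<in> sets ?P" unfolding G_def by (rule sets.sets_Collect_finite_All) (use Gi in auto)
    have fm[measurable]: "(\<lambda>S. \<bar>emp_hinge \<tau> n S u - Lpop \<nu> \<tau> u\<bar>) \<in> borel_measurable ?P" for u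
      by (intro borel_measurable_abs borel_measurable_diff emp_meas borel_measurable_const)
    have Badm: "Bad u \<in> sets ?P" for u unfolding Bad_def by measurable
    have Goodm: "Good \<in> sets ?P" unfolding Good_def
      by (rule sets.sets_Collect_finite_All) (use N(1) in auto)
    have Em: "E \<in> sets ?P" unfolding E_def using Gm Goodm by auto
    have AEG: "AE S in ?P. S \<in> G"
    proof -
      have "AE S in ?P. \<forall>i\<in>{..<n}. fst (S i) \<in> B1 \<and> snd (S i) \<in> {-1,1}"
      proof (rule AE_finite_allI)
        fix i assume i: "i \<in> {..<n}"
        show "AE S in ?P. fst (S i) \<in> B1 \<and> snd (S i) \<in> {-1,1}"
          using AE_PiM_component[where M="\<lambda>_. DD \<nu>" and P="\<lambda>p. fst p \<in> B1 \<and> snd p \<in> {-1,1}", OF prob_DD i AE_DD]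
          by simp
      qed simp
      then show ?thesis unfolding G_def by (auto elim: eventually_mono)
    qed
    have mG: "measure ?P (space ?P - G) = 0"
      using prob_eq_0[of "space ?P - G"] Gm AEG by (auto elim: eventually_mono)
    have sub: "space ?P - E \<subseteq> (space ?P - G) \<union> (\<Union>u\<in>N. Bad u)"
      unfolding E_def Good_def Bad_def by auto
    have hb: "measure ?P (Bad u) \<le> 2 * exp (-2 * real n * c)" if "u \<in> N" for u
    proof -
      have "norm u \<le> 1" using N(2) that by auto
      from hoeff_point[OF tau nu this n, of "\<gamma>/4"] g
      have "measure ?P (Bad u) \<le> 2 * exp (-2 * real n * (\<gamma>/4)^2 / (1 + 1/\<tau> - 0)^2)"
        unfolding Bad_def by simp
      also have "-2 * real n * (\<gamma>/4)^2 / (1 + 1/\<tau> - 0)^2 = -2 * real n * c"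
        by (simp add: c_def B_def)
      finally show ?thesis .
    qed
    have "measure ?P (space ?P - E) \<le> measure ?P ((space ?P - G) \<union> (\<Union>u\<in>N. Bad u))"
      by (rule finite_measure_mono[OF sub]) (use Gm Badm N(1) in auto)
    also have "\<dots> \<le> measure ?P (space ?P - G) + measure ?P (\<Union>u\<in>N. Bad u)"
      by (rule measure_Un_le) (use Gm Badm N(1) in auto)
    also have "measure ?P (\<Union>u\<in>N. Bad u) \<le> (\<Sum>u\<in>N. measure ?P (Bad u))"
      by (rule measure_UNION_le) (use N(1) Badm in auto)
    also have "\<dots> \<le> (\<Sum>u\<in>N. 2 * exp (-2 * real n * c))"
      by (rule sum_mono) (use hb in auto)
    also have "\<dots> = real (card N) * (2 * exp (- (2 * real n * c)))" by simp
    also have "\<dots> \<le> real (card N) * (2 * (1 / (2 * real n * c)))"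
      using exp_neg_bound[of "2 * real n * c"] n cp by (intro mult_left_mono) auto
    also have "\<dots> = real (card N) / (c * real n)" using n cp by (simp add: field_simps)
    also have "\<dots> \<le> \<delta>"
    proof -
      have "real (card N) \<le> real n * (c * \<delta>)" using nbig cp d by (simp add: field_simps)
      then show ?thesis using n cp by (simp add: field_simps mult.commute mult.left_commute)
    qed
    finally have "measure ?P (space ?P - E) \<le> \<delta>" using mG by simp
    then have mE: "measure ?P E \<ge> 1 - \<delta>" using prob_compl[OF Em] by simp
    have propS: "(\<forall>i<n. fst (S i) \<in> B1 \<and> snd (S i) \<in> {-1,1}) \<and>
        (\<forall>w\<in>B1. \<bar>emp_hinge \<tau> n S w - Lpop \<nu> \<tau> w\<bar> < \<gamma>/2)" if S: "S \<in> E" for S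
    proof
      show Sc: "\<forall>i<n. fst (S i) \<in> B1 \<and> snd (S i) \<in> {-1,1}" using S by (auto simp: E_def G_def)
      show "\<forall>w\<in>B1. \<bar>emp_hinge \<tau> n S w - Lpop \<nu> \<tau> w\<bar> < \<gamma>/2"
      proof
        fix w assume w: "w \<in> B1"
        then obtain u where u: "u \<in> N" "w \<in> ball u \<rho>" using N(3) by blast
        have du: "norm (w - u) < \<rho>" using u(2) by (simp add: dist_norm norm_minus_commute)
        have a1: "\<bar>emp_hinge \<tau> n S w - emp_hinge \<tau> n S u\<bar> < \<gamma>/8"
        proof -
          have "\<bar>emp_hinge \<tau> n S w - emp_hinge \<tau> n S u\<bar> \<le> norm (w - u) / \<tau>"
            by (rule emp_lip[OF tau n Sc])
          also have "\<dots> < \<rho> / \<tau>" using du tau by (simp add: divide_strict_right_mono)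
          also have "\<dots> = \<gamma>/8" using tau by (simp add: \<rho>_def)
          finally show ?thesis .
        qed
        have a2: "\<bar>emp_hinge \<tau> n S u - Lpop \<nu> \<tau> u\<bar> < \<gamma>/4" using S u(1) by (auto simp: E_def Good_def)
        have a3: "\<bar>Lpop \<nu> \<tau> u - Lpop \<nu> \<tau> w\<bar> < \<gamma>/8"
        proof -
          have "\<bar>Lpop \<nu> \<tau> u - Lpop \<nu> \<tau> w\<bar> \<le> norm (u - w) / \<tau>" by (rule Lpop_lip[OF tau nu])
          also have "\<dots> < \<rho> / \<tau>" using du tau by (simp add: divide_strict_right_mono norm_minus_commute)
          also have "\<dots> = \<gamma>/8" using tau by (simp add: \<rho>_def)
          finally show ?thesis .
        qed
        show "\<bar>emp_hinge \<tau> n S w - Lpop \<nu> \<tau> w\<bar> < \<gamma>/2" using a1 a2 a3 by linarith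
      qed
    qed
    show "n > 0 \<and> (\<exists>E\<in>sets ?P. measure ?P E \<ge> 1 - \<delta> \<and>
     (\<forall>S\<in>E. (\<forall>i<n. fst (S i) \<in> B1 \<and> snd (S i) \<in> {-1,1}) \<and>
        (\<forall>w\<in>B1. \<bar>emp_hinge \<tau> n S w - Lpop \<nu> \<tau> w\<bar> < \<gamma>/2)))"
      using n Em mE propS by blast
  qed
qed

theorem theorem6:
  fixes \<tau> \<beta> :: real
  assumes "\<tau> > 0" and "0 \<le> \<beta>" and "\<beta> < 1"
  shows "\<exists>(D :: (point \<times> real) measure) (\<eta> :: point \<Rightarrow> real) (wstar :: point).
    prob_space D \<and> sets D = sets (borel \<Otimes>\<^sub>M borel) \<and>
    (AE p in D. fst p \<in> B1 \<and> snd p \<in> {-1, 1}) \<and>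
    distr D borel fst = unifB1 \<and>
    \<eta> \<in> borel_measurable borel \<and>
    (\<forall>x. 0 \<le> \<eta> x \<and> \<eta> x \<le> 1) \<and>
    (\<forall>A\<in>sets borel. measure D (A \<times> {1}) = (\<integral>x. indicator A x * \<eta> x \<partial>unifB1)) \<and>
    wstar \<noteq> 0 \<and>
    (AE x in unifB1. (2 * \<eta> x - 1) * (wstar \<bullet> x) \<ge> 0) \<and>
    (\<forall>x\<in>B1. \<bar>\<eta> x - (1 - \<eta> x)\<bar> \<ge> \<beta>) \<and>
    (\<exists>\<epsilon>>0. \<forall>\<delta>>0. \<exists>m. \<forall>n\<ge>m.
       \<exists>E\<in>sets (PiM {..<n} (\<lambda>_. D)).
         measure (PiM {..<n} (\<lambda>_. D)) E \<ge> 1 - \<delta> \<and>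
         (\<forall>S\<in>E. \<forall>w. hinge_minimizer \<tau> n S w \<longrightarrow> err D w - err D wstar > \<epsilon>))"
proof -
  define \<nu> where "\<nu> = (1 - \<beta>) / 4"
  have nu: "0 < \<nu>" "\<nu> < 1/2" "\<nu> \<le> 1" "0 \<le> \<nu>" using assms by (auto simp: \<nu>_def)
  have tau: "\<tau> > 0" using assms by simp
  define D where "D = DD \<nu>"
  define wstar :: point where "wstar = vector [1, 0]"
  obtain w0 \<gamma> \<psi>0 where gap: "w0 \<in> B1" "\<gamma> > 0" "\<psi>0 > 0" "\<forall>v\<in>B1. Lpop \<nu> \<tau> w0 \<le> Lpop \<nu> \<tau> v"
      "\<forall>w\<in>B1. Psi w \<le> \<psi>0/2 \<longrightarrow> Lpop \<nu> \<tau> w \<ge> Lpop \<nu> \<tau> w0 + \<gamma>"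
    using pop_gap[OF tau nu(1,2)] by blast
  define \<epsilon> where "\<epsilon> = (1 - 2*\<nu>) * \<psi>0 / 2"
  have eps: "\<epsilon> > 0" using nu gap(3) by (simp add: \<epsilon>_def)
  have main: "\<forall>\<delta>>0. \<exists>m. \<forall>n\<ge>m.
       \<exists>E\<in>sets (PiM {..<n} (\<lambda>_. D)).
         measure (PiM {..<n} (\<lambda>_. D)) E \<ge> 1 - \<delta> \<and>
         (\<forall>S\<in>E. \<forall>w. hinge_minimizer \<tau> n S w \<longrightarrow> err D w - err D wstar > \<epsilon>)"
  proof (intro allI impI)
    fix \<delta> :: real assume d: "\<delta> > 0"
    obtain m where m: "\<forall>n\<ge>m. n > 0 \<and> (\<exists>E\<in>sets (PiD \<nu> n). measure (PiD \<nu> n) E \<ge> 1 - \<delta> \<and>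
       (\<forall>S\<in>E. (\<forall>i<n. fst (S i) \<in> B1 \<and> snd (S i) \<in> {-1,1}) \<and>
          (\<forall>w\<in>B1. \<bar>emp_hinge \<tau> n S w - Lpop \<nu> \<tau> w\<bar> < \<gamma>/2)))"
      using unif_conv[OF tau nu(4,3) gap(2) d] by blast
    show "\<exists>m. \<forall>n\<ge>m. \<exists>E\<in>sets (PiM {..<n} (\<lambda>_. D)).
         measure (PiM {..<n} (\<lambda>_. D)) E \<ge> 1 - \<delta> \<and>
         (\<forall>S\<in>E. \<forall>w. hinge_minimizer \<tau> n S w \<longrightarrow> err D w - err D wstar > \<epsilon>)"
    proof (intro exI[of _ m] allI impI)
      fix n assume "m \<le> n"
      then obtain E where E: "E \<in> sets (PiD \<nu> n)" "measure (PiD \<nu> n) E \<ge> 1 - \<delta>"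
        "\<forall>S\<in>E. (\<forall>i<n. fst (S i) \<in> B1 \<and> snd (S i) \<in> {-1,1}) \<and>
          (\<forall>w\<in>B1. \<bar>emp_hinge \<tau> n S w - Lpop \<nu> \<tau> w\<bar> < \<gamma>/2)"
        using m by blast
      have good: "err D w - err D wstar > \<epsilon>" if S: "S \<in> E" and hm: "hinge_minimizer \<tau> n S w" for S w
      proof -
        have wB: "w \<in> B1" and wmin: "emp_hinge \<tau> n S w \<le> emp_hinge \<tau> n S w0"
          using hm gap(1) unfolding hinge_minimizer_def by auto
        have u: "\<forall>w\<in>B1. \<bar>emp_hinge \<tau> n S w - Lpop \<nu> \<tau> w\<bar> < \<gamma>/2" using E(3) S by blast
        have "\<bar>emp_hinge \<tau> n S w0 - Lpop \<nu> \<tau> w0\<bar> < \<gamma>/2" using u gap(1) by blast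
        moreover have "\<bar>emp_hinge \<tau> n S w - Lpop \<nu> \<tau> w\<bar> < \<gamma>/2" using u wB by blast
        ultimately have "Lpop \<nu> \<tau> w < Lpop \<nu> \<tau> w0 + \<gamma>" using wmin by linarith
        then have "\<not> Psi w \<le> \<psi>0/2" using gap(5) wB by force
        then have ps: "Psi w > \<psi>0/2" by simp
        have "err D w - err D wstar \<ge> (1 - 2*\<nu>) * Psi w"
          unfolding D_def wstar_def by (rule exc_bound[OF nu(1,2)])
        moreover have "(1 - 2*\<nu>) * Psi w > (1 - 2*\<nu>) * (\<psi>0/2)"
          using ps nu by (intro mult_strict_left_mono) auto
        ultimately show ?thesis by (simp add: \<epsilon>_def)
      qed
      show "\<exists>E\<in>sets (PiM {..<n} (\<lambda>_. D)).
         measure (PiM {..<n} (\<lambda>_. D)) E \<ge> 1 - \<delta> \<and>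
         (\<forall>S\<in>E. \<forall>w. hinge_minimizer \<tau> n S w \<longrightarrow> err D w - err D wstar > \<epsilon>)"
        using E good unfolding D_def by blast
    qed
  qed
  have c1: "prob_space D" unfolding D_def by (rule prob_DD)
  have c2: "sets D = sets (borel \<Otimes>\<^sub>M borel)" unfolding D_def by simp
  have c3: "AE p in D. fst p \<in> B1 \<and> snd p \<in> {-1, 1}" unfolding D_def by (rule AE_DD)
  have c4: "distr D borel fst = unifB1" unfolding D_def by (rule distr_DD_fst)
  have c5: "eta \<nu> \<in> borel_measurable borel" by simp
  have c6: "\<forall>x. 0 \<le> eta \<nu> x \<and> eta \<nu> x \<le> 1" using nu by (auto simp: eta_def)
  have c7: "\<forall>A\<in>sets borel. measure D (A \<times> {1}) = (\<integral>x. indicator A x * eta \<nu> x \<partial>unifB1)"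
    unfolding D_def using measure_DD_A1[OF nu(4,3)] by blast
  have c8: "wstar \<noteq> 0" by (simp add: wstar_def vec_eq_iff vector_2 forall_2)
  have c9: "AE x in unifB1. (2 * eta \<nu> x - 1) * (wstar \<bullet> x) \<ge> 0"
  proof (rule AE_I2)
    fix x :: point
    have "wstar \<bullet> x = x$1" by (simp add: wstar_def vec2_inner)
    then show "(2 * eta \<nu> x - 1) * (wstar \<bullet> x) \<ge> 0" using nu
      by (auto simp: eta_def mult_nonneg_nonneg mult_nonpos_nonpos)
  qed
  have c10: "\<forall>x\<in>B1. \<bar>eta \<nu> x - (1 - eta \<nu> x)\<bar> \<ge> \<beta>"
    using assms nu by (auto simp: eta_def \<nu>_def field_simps)
  show ?thesis
    using c1 c2 c3 c4 c5 c6 c7 c8 c9 c10 main eps by blast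
qed

end
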